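(* Let $n\geq 3$ and let $A_n$ be the graph with vertices $\{1,\dots,n\}$ and edges $\{i,i+1\}$ for $1\leq i\leq n-1$. Then $$\#\mathcal{P}_d(\mathcal{E}_{A_n})=\begin{cases}2n-2d & \text{if } 3\leq d\leq n-1,\\ 0 & \text{if } d\geq n,\end{cases}$$ and $\mathcal{P}_2(\mathcal{E}_{A_n})$ is a union of $2n-6$ copies of $\mathbb{P}^1$ if $n>3$, and consists of two points if $n=3$.
   Context: Work over an algebraically closed field $k$. The Fomin–Kirillov algebra $\mathcal{E}_n$ is the graded $k$-algebra generated by degree-$1$ elements $x_{ij}$, $1\leq i<j\leq n$, subject to: $x_{ij}^2=0$; $x_{ij}x_{kl}=x_{kl}x_{ij}$ whenever $\{i,j\}\cap\{k,l\}=\emptyset$; $x_{ij}x_{jk}-x_{jk}x_{ik}-x_{ik}x_{ij}=0$ and $x_{jk}x_{ij}-x_{ik}x_{jk}-x_{ij}x_{ik}=0$ for $i<j<k$. For a graph $G$ on $\{1,\dots,n\}$, $\mathcal{E}_G$ is the subalgebra of $\mathcal{E}_n$ generated by the $x_{ij}$ with $\{i,j\}$ an edge of $G$. For a connected graded algebra $A=k\langle x_1,\dots,x_r\rangle/I$ generated in degree $1$, a degree-$d$ truncated point module is a graded cyclic module $M=ke_0\oplus\cdots\oplus ke_d$ generated by $e_0$; writing $x_i e_j=\lambda_i^j e_{j+1}$, such modules correspond bijectively to points $([\lambda_1^0:\cdots:\lambda_r^0],\dots,[\lambda_1^{d-1}:\cdots:\lambda_r^{d-1}])\in(\mathbb{P}^{r-1})^{\times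 d}$ satisfying the multilinearized relations (each homogeneous relation $\sum_I c_I x_{i_1}\cdots x_{i_t}$ yields $\sum_I c_I\lambda_{i_1}^{s+t-1}\cdots\lambda_{i_t}^{s}=0$ for $0\leq s\leq d-t$). $\mathcal{P}_d(A)$ denotes this subset of $(\mathbb{P}^{r-1})^{\times d}$; here $A=\mathcal{E}_{A_n}$ with generators $x_{i,i+1}$, $1\leq i\leq n-1$. *)

theory Defs
  imports "HOL-Computational_Algebra.Polynomial"
begin

text \<open>Noncommutative polynomials over a field in letters of type 'l, represented as
coefficient functions on words (lists of letters).  The generator x_ij of the
Fomin-Kirillov algebra E_n is the letter (i,j) with 1 <= i < j <= n.\<close>

type_synonym ('l, 'k) ncpoly = "'l list \<Rightarrow> 'k"

definition mono :: "'l list \<Rightarrow> ('l, 'k::field) ncpoly" where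
  "mono w = (\<lambda>u. if u = w then 1 else 0)"

text \<open>u * r * v for words u, v.\<close>
definition sandwich :: "'l list \<Rightarrow> ('l, 'k::field) ncpoly \<Rightarrow> 'l list \<Rightarrow> ('l, 'k) ncpoly" where
  "sandwich u r v = (\<lambda>w. if length u + length v \<le> length w \<and> take (length u) w = u
       \<and> drop (length w - length v) w = v
     then r (take (length w - length u - length v) (drop (length u) w)) else 0)"

definition is_gen :: "nat \<Rightarrow> nat \<times> nat \<Rightarrow> bool" where
  "is_gen n p \<longleftrightarrow> 1 \<le> fst p \<and> fst p < snd p \<and> snd p \<le> n"

inductive_set FK_rels :: "nat \<Rightarrow> ((nat \<times> nat), 'k::field) ncpoly set" for n where
  sq: "1 \<le> i \<Longrightarrow> i < j \<Longrightarrow> j \<le> n \<Longrightarrow> mono [(i,j),(i,j)] \<in> FK_rels n"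
| comm: "is_gen n (i,j) \<Longrightarrow> is_gen n (k,l) \<Longrightarrow> {i,j} \<inter> {k,l} = {} \<Longrightarrow>
     (\<lambda>w. mono [(i,j),(k,l)] w - mono [(k,l),(i,j)] w) \<in> FK_rels n"
| tri1: "1 \<le> i \<Longrightarrow> i < j \<Longrightarrow> j < k \<Longrightarrow> k \<le> n \<Longrightarrow>
     (\<lambda>w. mono [(i,j),(j,k)] w - mono [(j,k),(i,k)] w - mono [(i,k),(i,j)] w) \<in> FK_rels n"
| tri2: "1 \<le> i \<Longrightarrow> i < j \<Longrightarrow> j < k \<Longrightarrow> k \<le> n \<Longrightarrow>
     (\<lambda>w. mono [(j,k),(i,j)] w - mono [(i,k),(j,k)] w - mono [(i,j),(i,k)] w) \<in> FK_rels n"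

inductive_set FK_ideal :: "nat \<Rightarrow> ((nat \<times> nat), 'k::field) ncpoly set" for n where
  zero: "(\<lambda>_. 0) \<in> FK_ideal n"
| add: "f \<in> FK_ideal n \<Longrightarrow> g \<in> FK_ideal n \<Longrightarrow> (\<lambda>w. f w + g w) \<in> FK_ideal n"
| smult: "f \<in> FK_ideal n \<Longrightarrow> (\<lambda>w. c * f w) \<in> FK_ideal n"
| gen: "r \<in> FK_rels n \<Longrightarrow> sandwich u r v \<in> FK_ideal n"

definition edgeA :: "nat \<Rightarrow> nat \<times> nat" where
  "edgeA a = (a, a + 1)"

text \<open>Homogeneous degree-t relations of E_{A_n}: homogeneous elements of the FK ideal
involving only the generators x_{a,a+1}, i.e. the kernel of k<x_{a,a+1}> -> E_n.\<close>
definition An_rel :: "nat \<Rightarrow> nat \<Rightarrow> ((nat \<times> nat), 'k::field) ncpoly \<Rightarrow> bool" where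
  "An_rel n t f \<longleftrightarrow> f \<in> FK_ideal n \<and>
     (\<forall>w. f w \<noteq> 0 \<longrightarrow> length w = t \<and> (\<forall>p\<in>set w. \<exists>a. 1 \<le> a \<and> a < n \<and> p = edgeA a))"

text \<open>Projective space P^{r-1}: nonzero vectors in k^r (functions supported on {1..r})
modulo nonzero scalars; a point is the set of representatives.\<close>
definition vecs :: "nat \<Rightarrow> (nat \<Rightarrow> 'k::field) set" where
  "vecs r = {v. (\<forall>i. v i \<noteq> 0 \<longrightarrow> i \<in> {1..r}) \<and> (\<exists>i. v i \<noteq> 0)}"

definition ppt :: "(nat \<Rightarrow> 'k::field) \<Rightarrow> (nat \<Rightarrow> 'k) set" where
  "ppt v = {(\<lambda>i. c * v i) | c. c \<noteq> 0}"

text \<open>P_d(E_{A_n}) as a subset of (P^{n-2})^d: a d-tuple of projective points, encoded as a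
function j |-> point, with value {} at j >= d.  Point j holds (lambda^j_1 : ... : lambda^j_{n-1}).\<close>
definition Pd_An :: "'k::field itself \<Rightarrow> nat \<Rightarrow> nat \<Rightarrow> (nat \<Rightarrow> (nat \<Rightarrow> 'k) set) set" where
  "Pd_An _ n d = {(\<lambda>j. if j < d then ppt (v j) else {}) | v :: nat \<Rightarrow> nat \<Rightarrow> 'k.
      (\<forall>j<d. v j \<in> vecs (n - 1)) \<and>
      (\<forall>(f :: ((nat \<times> nat), 'k) ncpoly) t s. An_rel n t f \<and> s + t \<le> d \<longrightarrow>
         (\<Sum>u\<in>{u. length u = t \<and> set u \<subseteq> {1..n - 1}}.
             f (map edgeA u) * (\<Prod>j<t. v (s + t - 1 - j) (u ! j))) = 0)}"

text \<open>A linearly embedded copy of P^1 inside (P^{r-1})^2: the image of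
[s:t] |-> (F(s,t), G(s,t)) where each component is either a linear embedding of P^1
(a projective line) or constant, and at least one component is a linear embedding.\<close>
definition line_map :: "nat \<Rightarrow> ('k::field \<times> 'k \<Rightarrow> (nat \<Rightarrow> 'k) set) \<Rightarrow> bool" where
  "line_map r F \<longleftrightarrow> (\<exists>a b. (\<forall>i. (a i \<noteq> 0 \<or> b i \<noteq> 0) \<longrightarrow> i \<in> {1..r}) \<and>
      (\<forall>s t. (\<forall>i. s * a i + t * b i = 0) \<longrightarrow> s = 0 \<and> t = 0) \<and>
      F = (\<lambda>(s,t). ppt (\<lambda>i. s * a i + t * b i)))"

definition const_map :: "nat \<Rightarrow> ('k::field \<times> 'k \<Rightarrow> (nat \<Rightarrow> 'k) set) \<Rightarrow> bool" where
  "const_map r F \<longleftrightarrow> (\<exists>p \<in> vecs r. F = (\<lambda>_. ppt p))"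

definition is_P1_copy :: "nat \<Rightarrow> (nat \<Rightarrow> (nat \<Rightarrow> 'k::field) set) set \<Rightarrow> bool" where
  "is_P1_copy r C \<longleftrightarrow> (\<exists>F G. (line_map r F \<or> const_map r F) \<and> (line_map r G \<or> const_map r G)
      \<and> (line_map r F \<or> line_map r G) \<and>
      C = {(\<lambda>j. if j = 0 then F (s,t) else if j = 1 then G (s,t) else {}) | s t. (s,t) \<noteq> (0,0)})"

end

theory Submission
  imports Defs
begin

definition Gs :: "nat \<Rightarrow> (nat \<times> nat) set" where
  "Gs n = {p. 1 \<le> fst p \<and> fst p < snd p \<and> snd p \<le> n}"

definition Wd :: "nat \<Rightarrow> nat \<Rightarrow> (nat \<times> nat) list set" where
  "Wd n t = {w. length w = t \<and> set w \<subseteq> Gs n}"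

lemma finite_Gs: "finite (Gs n)"
proof -
  have "Gs n \<subseteq> {0..n} \<times> {0..n}" by (auto simp: Gs_def)
  thus ?thesis by (rule finite_subset) auto
qed

lemma finite_Wd: "finite (Wd n t)"
  unfolding Wd_def using finite_lists_length_eq[OF finite_Gs] by (simp add: conj_commute)

definition stp :: "bool \<Rightarrow> nat \<Rightarrow> nat \<times> nat \<Rightarrow> nat set \<Rightarrow> nat set option" where
  "stp b n p R = (if p \<in> Gs n \<and> fst p \<in> R \<and> snd p \<in> R \<and> (\<forall>m. fst p < m \<and> m < snd p \<longrightarrow> m \<notin> R)
     then Some (R - {if b then fst p else snd p}) else None)"

fun run :: "bool \<Rightarrow> nat \<Rightarrow> (nat \<times> nat) list \<Rightarrow> nat set \<Rightarrow> nat set option" where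
  "run b n [] R = Some R"
| "run b n (p # u) R = (case run b n u R of None \<Rightarrow> None | Some R1 \<Rightarrow> stp b n p R1)"

lemma run_append: "run b n (u @ w) R = (case run b n w R of None \<Rightarrow> None | Some R1 \<Rightarrow> run b n u R1)"
  by (induction u) (auto split: option.splits)

lemma run_notG: "run b n u R = Some R' \<Longrightarrow> set u \<subseteq> Gs n"
  by (induction u arbitrary: R') (auto simp: stp_def split: option.splits if_splits)

lemma mono_sum:
  assumes "finite W"
  shows "(\<Sum>m\<in>W. mono w m * h m) = (if w \<in> W then h w else (0::'k::field))"
proof -
  have "(\<Sum>m\<in>W. mono w m * h m) = (\<Sum>m\<in>W. if m = w then h w else 0)"
    by (intro sum.cong) (auto simp: mono_def)
  also have "\<dots> = (if w \<in> W then h w else 0)" using assms by (simp add: sum.delta)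
  finally show ?thesis .
qed

lemma rel_len: "r \<in> FK_rels n \<Longrightarrow> r m \<noteq> 0 \<Longrightarrow> length m = 2"
  by (induction rule: FK_rels.induct) (auto simp: mono_def split: if_splits)

lemma run2: "run b n [p, q] R = (case stp b n q R of None \<Rightarrow> None | Some R1 \<Rightarrow> stp b n p R1)"
  by simp

lemma run_sq: "run b n [(i,j),(i,j)] R = None"
  by (auto simp: stp_def split: option.splits)

lemma run_tri1T: "i < j \<Longrightarrow> j < k \<Longrightarrow> run True n [(i,j),(j,k)] R = None"
  by (auto simp: stp_def)
lemma run_tri1T2: "i < j \<Longrightarrow> j < k \<Longrightarrow> run True n [(j,k),(i,k)] R = None"
  by (auto simp: stp_def)
lemma run_tri1T3: "i < j \<Longrightarrow> j < k \<Longrightarrow> run True n [(i,k),(i,j)] R = None"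
  by (auto simp: stp_def)
lemma run_tri1F2: "i < j \<Longrightarrow> j < k \<Longrightarrow> run False n [(j,k),(i,k)] R = None"
  by (auto simp: stp_def)
lemma run_tri2F1: "i < j \<Longrightarrow> j < k \<Longrightarrow> run False n [(j,k),(i,j)] R = None"
  by (auto simp: stp_def)
lemma run_tri2F2: "i < j \<Longrightarrow> j < k \<Longrightarrow> run False n [(i,k),(j,k)] R = None"
  by (auto simp: stp_def)
lemma run_tri2F3: "i < j \<Longrightarrow> j < k \<Longrightarrow> run False n [(i,j),(i,k)] R = None"
  by (auto simp: stp_def)
lemma run_tri2T3: "i < j \<Longrightarrow> j < k \<Longrightarrow> run True n [(i,j),(i,k)] R = None"
  by (auto simp: stp_def)

definition Ctri :: "nat \<Rightarrow> nat \<Rightarrow> nat \<Rightarrow> nat \<Rightarrow> nat set \<Rightarrow> bool" where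
  "Ctri n i j k R \<longleftrightarrow> 1 \<le> i \<and> k \<le> n \<and> i \<in> R \<and> j \<in> R \<and> k \<in> R \<and> (\<forall>m. i < m \<and> m < k \<and> m \<noteq> j \<longrightarrow> m \<notin> R)"

lemma run_tri1F_a: assumes "i < j" "j < k"
  shows "run False n [(i,j),(j,k)] R = (if Ctri n i j k R then Some (R - {j,k}) else None)"
proof -
  have "stp False n (j,k) R = (if 1 \<le> j \<and> k \<le> n \<and> j \<in> R \<and> k \<in> R \<and> (\<forall>m. j < m \<and> m < k \<longrightarrow> m \<notin> R) then Some (R - {k}) else None)"
    using assms by (simp add: stp_def Gs_def)
  moreover have "stp False n (i,j) (R - {k}) = (if 1 \<le> i \<and> j \<le> n \<and> i \<in> R \<and> j \<in> R \<and> (\<forall>m. i < m \<and> m < j \<longrightarrow> m \<notin> R) then Some (R - {k} - {j}) else None)"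
    using assms by (simp add: stp_def Gs_def)
  ultimately show ?thesis using assms unfolding Ctri_def
    apply (simp only: run2)
    apply (auto split: if_splits)
    by (meson linorder_neqE_nat)
qed


lemma run_tri1F_b: assumes "i < j" "j < k"
  shows "run False n [(i,k),(i,j)] R = (if Ctri n i j k R then Some (R - {j,k}) else None)"
proof -
  have "stp False n (i,j) R = (if 1 \<le> i \<and> j \<le> n \<and> i \<in> R \<and> j \<in> R \<and> (\<forall>m. i < m \<and> m < j \<longrightarrow> m \<notin> R) then Some (R - {j}) else None)"
    using assms by (simp add: stp_def Gs_def)
  moreover have "stp False n (i,k) (R - {j}) = (if 1 \<le> i \<and> k \<le> n \<and> i \<in> R \<and> k \<in> R \<and> (\<forall>m. i < m \<and> m < k \<and> m \<noteq> j \<longrightarrow> m \<notin> R) then Some (R - {j} - {k}) else None)"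
  proof -
    have "(\<forall>m. i < m \<and> m < k \<longrightarrow> m \<notin> R - {j}) \<longleftrightarrow> (\<forall>m. i < m \<and> m < k \<and> m \<noteq> j \<longrightarrow> m \<notin> R)" by blast
    thus ?thesis using assms unfolding stp_def Gs_def by simp blast
  qed
  ultimately show ?thesis using assms unfolding Ctri_def
    apply (simp only: run2)
    apply (auto split: if_splits)
    done
qed


lemma run_tri2T_a: assumes "i < j" "j < k"
  shows "run True n [(j,k),(i,j)] R = (if Ctri n i j k R then Some (R - {i,j}) else None)"
proof -
  have "stp True n (i,j) R = (if 1 \<le> i \<and> j \<le> n \<and> i \<in> R \<and> j \<in> R \<and> (\<forall>m. i < m \<and> m < j \<longrightarrow> m \<notin> R) then Some (R - {i}) else None)"
    using assms by (simp add: stp_def Gs_def)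
  moreover have "stp True n (j,k) (R - {i}) = (if 1 \<le> j \<and> k \<le> n \<and> j \<in> R \<and> k \<in> R \<and> (\<forall>m. j < m \<and> m < k \<longrightarrow> m \<notin> R) then Some (R - {i} - {j}) else None)"
    using assms by (auto simp: stp_def Gs_def)
  ultimately show ?thesis using assms unfolding Ctri_def
    apply (simp only: run2)
    apply (auto split: if_splits)
    by (meson linorder_neqE_nat)
qed


lemma run_tri2T_b: assumes "i < j" "j < k"
  shows "run True n [(i,k),(j,k)] R = (if Ctri n i j k R then Some (R - {i,j}) else None)"
proof -
  have "stp True n (j,k) R = (if 1 \<le> j \<and> k \<le> n \<and> j \<in> R \<and> k \<in> R \<and> (\<forall>m. j < m \<and> m < k \<longrightarrow> m \<notin> R) then Some (R - {j}) else None)"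
    using assms by (simp add: stp_def Gs_def)
  moreover have "stp True n (i,k) (R - {j}) = (if 1 \<le> i \<and> k \<le> n \<and> i \<in> R \<and> k \<in> R \<and> (\<forall>m. i < m \<and> m < k \<and> m \<noteq> j \<longrightarrow> m \<notin> R) then Some (R - {j} - {i}) else None)"
  proof -
    have "(\<forall>m. i < m \<and> m < k \<longrightarrow> m \<notin> R - {j}) \<longleftrightarrow> (\<forall>m. i < m \<and> m < k \<and> m \<noteq> j \<longrightarrow> m \<notin> R)" by blast
    thus ?thesis using assms unfolding stp_def Gs_def by simp blast
  qed
  ultimately show ?thesis using assms unfolding Ctri_def
    apply (simp only: run2)
    apply (auto split: if_splits)
    done
qed

definition V :: "nat \<Rightarrow> nat set \<Rightarrow> nat \<times> nat \<Rightarrow> bool" where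
  "V n R p \<longleftrightarrow> p \<in> Gs n \<and> fst p \<in> R \<and> snd p \<in> R \<and> (\<forall>m. fst p < m \<and> m < snd p \<longrightarrow> m \<notin> R)"

lemma stp_V: "stp b n p R = (if V n R p then Some (R - {if b then fst p else snd p}) else None)"
  by (simp add: stp_def V_def)

lemma V_remove:
  assumes kl: "V n R (k,l)" and dis: "{i,j} \<inter> {k,l} = {}" and x: "x \<in> {k,l}"
  shows "V n (R - {x}) (i,j) \<longleftrightarrow> V n R (i,j)"
proof
  assume "V n R (i,j)" thus "V n (R - {x}) (i,j)" using dis x by (auto simp: V_def)
next
  assume h: "V n (R - {x}) (i,j)"
  have ij: "i < j" "i \<in> R" "j \<in> R" using h by (auto simp: V_def Gs_def)
  have klp: "k < l" "k \<in> R" "l \<in> R" "\<And>m. k < m \<Longrightarrow> m < l \<Longrightarrow> m \<notin> R" using kl by (auto simp: V_def Gs_def)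
  have nb: "\<And>m. i < m \<Longrightarrow> m < j \<Longrightarrow> m \<in> R \<Longrightarrow> m = x" using h by (auto simp: V_def)
  have "\<forall>m. i < m \<and> m < j \<longrightarrow> m \<notin> R"
  proof (intro allI impI)
    fix m assume m: "i < m \<and> m < j"
    show "m \<notin> R"
    proof
      assume mR: "m \<in> R"
      hence mx: "m = x" using nb m by blast
      show False
      proof (cases "x = k")
        case True
        have "l \<noteq> x" using klp True by auto
        hence "\<not> (i < l \<and> l < j)" using nb klp(3) by blast
        moreover have "l \<noteq> j" using dis by auto
        ultimately have "j < l" using m mx True klp(1) by auto
        thus False using klp(4)[of j] ij m mx True by auto
      next
        case False
        hence xl: "x = l" using x by auto
        have "k \<noteq> x" using klp xl by auto
        hence "\<not> (i < k \<and> k < j)" using nb klp(2) by blast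
        moreover have "k \<noteq> i" using dis by auto
        ultimately have "k < i" using m mx xl klp(1) by auto
        thus False using klp(4)[of i] ij m mx xl by auto
      qed
    qed
  qed
  thus "V n R (i,j)" using h ij by (auto simp: V_def)
qed

lemma run_comm:
  assumes dis: "{i,j} \<inter> {k,l} = {}"
  shows "run b n [(i,j),(k,l)] R = run b n [(k,l),(i,j)] R"
proof -
  have dis2: "{k,l} \<inter> {i,j} = {}" using dis by auto
  have L: "run b n [(i,j),(k,l)] R = (if V n R (k,l) \<and> V n R (i,j) then Some (R - {if b then k else l} - {if b then i else j}) else None)"
    using V_remove[OF _ dis, of n R "if b then k else l"] by (auto simp: stp_V)
  have R: "run b n [(k,l),(i,j)] R = (if V n R (i,j) \<and> V n R (k,l) then Some (R - {if b then i else j} - {if b then k else l}) else None)"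
    using V_remove[OF _ dis2, of n R "if b then i else j"] by (auto simp: stp_V)
  show ?thesis unfolding L R by (auto simp: Diff_insert2[symmetric] insert_commute)
qed

lemma sum_mono2:
  assumes "finite W"
  shows "(\<Sum>m\<in>W. (mono A m - mono B m) * h m) = (if A \<in> W then h A else 0) - (if B \<in> W then h B else (0::'k::field))"
  using assms by (simp add: left_diff_distrib sum_subtractf mono_sum)

lemma sum_mono3:
  assumes "finite W"
  shows "(\<Sum>m\<in>W. (mono A m - mono B m - mono C m) * h m) = (if A \<in> W then h A else 0) - (if B \<in> W then h B else 0) - (if C \<in> W then h C else (0::'k::field))"
  using assms by (simp add: left_diff_distrib sum_subtractf mono_sum)

lemma rel_zero:
  assumes r: "r \<in> FK_rels n" and g0: "g None = 0"
  shows "(\<Sum>m\<in>Wd n t. r m * g (run b n m R)) = (0::'k::field)"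
proof (cases "t = 2")
  case False
  have "\<And>m. m \<in> Wd n t \<Longrightarrow> r m = 0" using rel_len[OF r] False by (auto simp: Wd_def)
  thus ?thesis by simp
next
  case True
  have fin: "finite (Wd n t)" by (rule finite_Wd)
  from r show ?thesis
  proof (induction rule: FK_rels.induct)
    case (sq i j)
    show ?case using fin by (simp add: mono_sum run_sq g0 del: run.simps)
  next
    case (comm i j k l)
    have eq: "(\<Sum>m\<in>Wd n t. (\<lambda>w. mono [(i,j),(k,l)] w - mono [(k,l),(i,j)] w) m * g (run b n m R))
        = (if [(i,j),(k,l)] \<in> Wd n t then g (run b n [(i,j),(k,l)] R) else 0) - (if [(k,l),(i,j)] \<in> Wd n t then g (run b n [(k,l),(i,j)] R) else 0)"
      using sum_mono2[OF fin, of "[(i,j),(k,l)]" "[(k,l),(i,j)]" "\<lambda>m. g (run b n m R)"] by simp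
    have "[(i,j),(k,l)] \<in> Wd n t \<longleftrightarrow> [(k,l),(i,j)] \<in> Wd n t" by (auto simp: Wd_def)
    thus ?case unfolding eq using run_comm[OF comm(3), of b n R] by (simp del: run.simps)
  next
    case (tri1 i j k)
    have W: "[(i,j),(j,k)] \<in> Wd n t" "[(j,k),(i,k)] \<in> Wd n t" "[(i,k),(i,j)] \<in> Wd n t"
      using tri1 True by (auto simp: Wd_def Gs_def)
    have eq: "(\<Sum>m\<in>Wd n t. (\<lambda>w. mono [(i,j),(j,k)] w - mono [(j,k),(i,k)] w - mono [(i,k),(i,j)] w) m * g (run b n m R))
       = g (run b n [(i,j),(j,k)] R) - g (run b n [(j,k),(i,k)] R) - g (run b n [(i,k),(i,j)] R)"
      using sum_mono3[OF fin, of "[(i,j),(j,k)]" "[(j,k),(i,k)]" "[(i,k),(i,j)]" "\<lambda>m. g (run b n m R)"] W by simp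
    show ?case unfolding eq
    proof (cases b)
      case True
      thus "g (run b n [(i,j),(j,k)] R) - g (run b n [(j,k),(i,k)] R) - g (run b n [(i,k),(i,j)] R) = 0"
        using run_tri1T[OF tri1(2,3)] run_tri1T2[OF tri1(2,3)] run_tri1T3[OF tri1(2,3)] g0 by (simp del: run.simps)
    next
      case False
      thus "g (run b n [(i,j),(j,k)] R) - g (run b n [(j,k),(i,k)] R) - g (run b n [(i,k),(i,j)] R) = 0"
        using run_tri1F_a[OF tri1(2,3)] run_tri1F2[OF tri1(2,3)] run_tri1F_b[OF tri1(2,3)] g0 by (simp del: run.simps)
    qed
  next
    case (tri2 i j k)
    have W: "[(j,k),(i,j)] \<in> Wd n t" "[(i,k),(j,k)] \<in> Wd n t" "[(i,j),(i,k)] \<in> Wd n t"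
      using tri2 True by (auto simp: Wd_def Gs_def)
    have eq: "(\<Sum>m\<in>Wd n t. (\<lambda>w. mono [(j,k),(i,j)] w - mono [(i,k),(j,k)] w - mono [(i,j),(i,k)] w) m * g (run b n m R))
       = g (run b n [(j,k),(i,j)] R) - g (run b n [(i,k),(j,k)] R) - g (run b n [(i,j),(i,k)] R)"
      using sum_mono3[OF fin, of "[(j,k),(i,j)]" "[(i,k),(j,k)]" "[(i,j),(i,k)]" "\<lambda>m. g (run b n m R)"] W by simp
    show ?case unfolding eq
    proof (cases b)
      case True
      thus "g (run b n [(j,k),(i,j)] R) - g (run b n [(i,k),(j,k)] R) - g (run b n [(i,j),(i,k)] R) = 0"
        using run_tri2T_a[OF tri2(2,3)] run_tri2T_b[OF tri2(2,3)] run_tri2T3[OF tri2(2,3)] g0 by (simp del: run.simps)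
    next
      case False
      thus "g (run b n [(j,k),(i,j)] R) - g (run b n [(i,k),(j,k)] R) - g (run b n [(i,j),(i,k)] R) = 0"
        using run_tri2F1[OF tri2(2,3)] run_tri2F2[OF tri2(2,3)] run_tri2F3[OF tri2(2,3)] g0 by (simp del: run.simps)
    qed
  qed
qed

lemma sandwich_app: "sandwich a r c (a @ m @ c) = r m"
  by (simp add: sandwich_def)

lemma sandwich_nz:
  assumes "sandwich a r c w \<noteq> 0"
  shows "w = a @ take (length w - length a - length c) (drop (length a) w) @ c \<and> length a + length c \<le> length w"
proof -
  have h: "length a + length c \<le> length w" "take (length a) w = a" "drop (length w - length c) w = c"
    using assms by (auto simp: sandwich_def split: if_splits)
  have d: "drop (length w - length a - length c) (drop (length a) w) = c"
    using h by (simp add: drop_drop)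
  have u: "drop (length a) w = take (length w - length a - length c) (drop (length a) w) @ c"
    using d by (metis append_take_drop_id)
  have "w = take (length a) w @ drop (length a) w" by simp
  also have "\<dots> = a @ take (length w - length a - length c) (drop (length a) w) @ c" using u h by simp
  finally show ?thesis using h by simp
qed

lemma SW:
  fixes h :: "(nat \<times> nat) list \<Rightarrow> 'k::field"
  shows "(\<Sum>w\<in>Wd n t. sandwich a r c w * h w) = (if set a \<subseteq> Gs n \<and> set c \<subseteq> Gs n \<and> length a + length c \<le> t
     then (\<Sum>m\<in>Wd n (t - length a - length c). r m * h (a @ m @ c)) else 0)"
proof (cases "set a \<subseteq> Gs n \<and> set c \<subseteq> Gs n \<and> length a + length c \<le> t")
  case False
  have "\<And>w. w \<in> Wd n t \<Longrightarrow> sandwich a r c w = 0"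
  proof (rule ccontr)
    fix w assume w: "w \<in> Wd n t" and nz: "sandwich a r c w \<noteq> 0"
    from sandwich_nz[OF nz] obtain m where "w = a @ m @ c" "length a + length c \<le> length w" by blast
    thus False using w False by (auto simp: Wd_def)
  qed
  thus ?thesis using False by (simp; blast)
next
  case True
  define t' where "t' = t - length a - length c"
  define F where "F = (\<lambda>m. a @ m @ c)"
  have inj: "inj_on F (Wd n t')" by (auto simp: F_def inj_on_def)
  have sub: "F ` Wd n t' \<subseteq> Wd n t" using True by (auto simp: F_def Wd_def t'_def)
  have z: "\<forall>w\<in>Wd n t - F ` Wd n t'. sandwich a r c w * h w = 0"
  proof (intro ballI)
    fix w assume w: "w \<in> Wd n t - F ` Wd n t'"
    show "sandwich a r c w * h w = 0"
    proof (rule ccontr)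
      assume "sandwich a r c w * h w \<noteq> 0"
      hence nz: "sandwich a r c w \<noteq> 0" by auto
      define m where "m = take (length w - length a - length c) (drop (length a) w)"
      from sandwich_nz[OF nz] have e: "w = a @ m @ c" and le: "length a + length c \<le> length w" unfolding m_def by auto
      have "m \<in> Wd n t'" using w e by (auto simp: Wd_def t'_def)
      thus False using w e by (auto simp: F_def)
    qed
  qed
  have "(\<Sum>w\<in>Wd n t. sandwich a r c w * h w) = (\<Sum>w\<in>F ` Wd n t'. sandwich a r c w * h w)"
    using sum.mono_neutral_right[OF finite_Wd sub z] by simp
  also have "\<dots> = (\<Sum>m\<in>Wd n t'. sandwich a r c (F m) * h (F m))"
    using sum.reindex[OF inj] by simp
  also have "\<dots> = (\<Sum>m\<in>Wd n t'. r m * h (a @ m @ c))" by (simp add: F_def sandwich_app)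
  finally show ?thesis using True by (simp add: t'_def)
qed

lemma ideal_zero:
  assumes "f \<in> FK_ideal n"
  shows "g None = 0 \<Longrightarrow> (\<Sum>w\<in>Wd n t. f w * g (run b n w R)) = (0::'k::field)"
  using assms
proof (induction arbitrary: t R g rule: FK_ideal.induct)
  case zero thus ?case by simp
next
  case (add f1 f2)
  thus ?case by (simp add: distrib_right sum.distrib)
next
  case (smult f c)
  have "(\<Sum>w\<in>Wd n t. c * f w * g (run b n w R)) = c * (\<Sum>w\<in>Wd n t. f w * g (run b n w R))"
    by (simp add: sum_distrib_left mult.assoc)
  thus ?case using smult by simp
next
  case (gen r a c)
  show ?case
  proof (cases "set a \<subseteq> Gs n \<and> set c \<subseteq> Gs n \<and> length a + length c \<le> t")
    case False thus ?thesis by (simp add: SW; blast)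
  next
    case True
    have eq: "(\<Sum>w\<in>Wd n t. sandwich a r c w * g (run b n w R)) = (\<Sum>m\<in>Wd n (t - length a - length c). r m * g (run b n (a @ m @ c) R))"
      using True by (simp add: SW)
    show ?thesis
    proof (cases "run b n c R")
      case None
      thus ?thesis unfolding eq using gen.prems by (simp add: run_append del: run.simps)
    next
      case (Some R1)
      define g' where "g' = (\<lambda>x. g (case x of None \<Rightarrow> None | Some R2 \<Rightarrow> run b n a R2))"
      have "\<And>m. g (run b n (a @ m @ c) R) = g' (run b n m R1)"
        using Some by (simp add: g'_def run_append del: run.simps split: option.splits)
      moreover have "g' None = 0" using gen.prems by (simp add: g'_def)
      ultimately show ?thesis unfolding eq using rel_zero[OF gen.hyps, of g'] by simp
    qed
  qed
qed

definition edgew :: "nat \<Rightarrow> (nat \<times> nat) list \<Rightarrow> bool" where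
  "edgew n w \<longleftrightarrow> (\<forall>p\<in>set w. \<exists>a. 1 \<le> a \<and> a < n \<and> p = edgeA a)"

lemma runT_ex: "1 \<le> c \<Longrightarrow> c + t \<le> n \<Longrightarrow> run True n (map edgeA (rev [c..<c+t])) {1..n} = Some ({1..n} - {c..<c+t})"
proof (induction t)
  case 0 thus ?case by simp
next
  case (Suc t)
  have e: "rev [c..<c + Suc t] = (c+t) # rev [c..<c+t]" by simp
  have "{1..n} - {c..<c+t} - {c+t} = {1..n} - {c..<c + Suc t}" by auto
  thus ?case using Suc by (simp only: e list.map run.simps) (auto simp: stp_def Gs_def edgeA_def)
qed

lemma runF_ex: "1 \<le> c \<Longrightarrow> c + t \<le> n \<Longrightarrow> run False n (map edgeA [c..<c+t]) {1..n} = Some ({1..n} - {c+1..<c+t+1})"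
proof (induction t arbitrary: c)
  case 0 thus ?case by simp
next
  case (Suc t)
  have e: "[c..<c + Suc t] = c # [Suc c..<Suc c + t]" by (simp add: upt_conv_Cons)
  have IH: "run False n (map edgeA [Suc c..<Suc c+t]) {1..n} = Some ({1..n} - {Suc c+1..<Suc c+t+1})"
    by (rule Suc.IH) (use Suc.prems in auto)
  have "{1..n} - {Suc c+1..<Suc c+t+1} - {c+1} = {1..n} - {c+1..<c + Suc t+1}" by auto
  thus ?case using Suc IH by (simp only: e list.map run.simps) (auto simp: stp_def Gs_def edgeA_def)
qed

lemma runT_uniq:
  "edgew n w \<Longrightarrow> length w = t \<Longrightarrow> 1 \<le> c \<Longrightarrow> c + t \<le> n \<Longrightarrow>
   run True n w {1..n} = Some ({1..n} - {c..<c+t}) \<Longrightarrow> w = map edgeA (rev [c..<c+t])"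
proof (induction t arbitrary: w)
  case 0 thus ?case by simp
next
  case (Suc t)
  then obtain p w' where w: "w = p # w'" by (cases w) auto
  from Suc.prems(1) obtain a where a: "1 \<le> a" "a < n" "p = edgeA a" by (auto simp: edgew_def w)
  have ew': "edgew n w'" "length w' = t" using Suc.prems(1,2) w by (auto simp: edgew_def)
  obtain R where R: "run True n w' {1..n} = Some R" and st: "stp True n (a, a+1) R = Some ({1..n} - {c..<c+Suc t})"
  proof (cases "run True n w' {1..n}")
    case None thus ?thesis using Suc.prems(5) by (simp add: w)
  next
    case (Some R) thus ?thesis using that Suc.prems(5) by (simp add: w a edgeA_def)
  qed
  have aR: "a \<in> R" "a+1 \<in> R" and Req: "R - {a} = {1..n} - {c..<c+Suc t}"
    using st by (auto simp: stp_def Gs_def split: if_splits)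
  have "a \<notin> R - {a}" by simp
  hence "a \<notin> {1..n} - {c..<c+Suc t}" unfolding Req .
  hence a1: "c \<le> a" "a < c + Suc t" using a by auto
  have "a+1 \<in> R - {a}" using aR by simp
  hence "a+1 \<in> {1..n} - {c..<c+Suc t}" unfolding Req .
  hence ac: "a = c + t" using a1 by auto
  have "R = insert a (R - {a})" using aR by (simp add: insert_absorb)
  also have "\<dots> = insert (c+t) ({1..n} - {c..<c+Suc t})" using Req ac by simp
  also have "\<dots> = {1..n} - {c..<c+t}" using Suc.prems(3,4) by auto
  finally have "R = {1..n} - {c..<c+t}" .
  hence "w' = map edgeA (rev [c..<c+t])"
    using Suc.IH[OF ew'] Suc.prems(3,4) R by simp
  thus ?case using w a ac by simp
qed

lemma runF_uniq:
  "edgew n w \<Longrightarrow> length w = t \<Longrightarrow> 1 \<le> c \<Longrightarrow> c + t \<le> n \<Longrightarrow>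
   run False n w {1..n} = Some ({1..n} - {c+1..<c+t+1}) \<Longrightarrow> w = map edgeA [c..<c+t]"
proof (induction t arbitrary: w c)
  case 0 thus ?case by simp
next
  case (Suc t)
  then obtain p w' where w: "w = p # w'" by (cases w) auto
  from Suc.prems(1) obtain a where a: "1 \<le> a" "a < n" "p = edgeA a" by (auto simp: edgew_def w)
  have ew': "edgew n w'" "length w' = t" using Suc.prems(1,2) w by (auto simp: edgew_def)
  obtain R where R: "run False n w' {1..n} = Some R" and st: "stp False n (a, a+1) R = Some ({1..n} - {c+1..<c+Suc t+1})"
  proof (cases "run False n w' {1..n}")
    case None thus ?thesis using Suc.prems(5) by (simp add: w)
  next
    case (Some R) thus ?thesis using that Suc.prems(5) by (simp add: w a edgeA_def)
  qed
  have aR: "a \<in> R" "a+1 \<in> R" and Req: "R - {a+1} = {1..n} - {c+1..<c+Suc t+1}"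
    using st by (auto simp: stp_def Gs_def split: if_splits)
  have "a+1 \<notin> R - {a+1}" by simp
  hence "a+1 \<notin> {1..n} - {c+1..<c+Suc t+1}" unfolding Req .
  hence a1: "c \<le> a" "a < c + Suc t" using a by auto
  have "a \<in> R - {a+1}" using aR by simp
  hence "a \<in> {1..n} - {c+1..<c+Suc t+1}" unfolding Req .
  hence ac: "a = c" using a1 by auto
  have "R = insert (a+1) (R - {a+1})" using aR by (simp add: insert_absorb)
  also have "\<dots> = insert (c+1) ({1..n} - {c+1..<c+Suc t+1})" using Req ac by simp
  also have "\<dots> = {1..n} - {Suc c+1..<Suc c+t+1}" using Suc.prems(3,4) by auto
  finally have "R = {1..n} - {Suc c+1..<Suc c+t+1}" .
  hence "w' = map edgeA [Suc c..<Suc c+t]"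
    using Suc.IH[OF ew', of "Suc c"] Suc.prems(3,4) R by simp
  moreover have e: "[c..<c+Suc t] = c # [Suc c..<Suc c+t]"
    by (metis add_Suc add_Suc_right less_add_Suc1 upt_conv_Cons)
  ultimately show ?case using w a ac by (simp del: upt_Suc)
qed

lemma edgew_Wd: "edgew n w \<Longrightarrow> set w \<subseteq> Gs n"
  by (auto simp: edgew_def Gs_def edgeA_def)

lemma chain_sum:
  fixes f :: "(nat \<times> nat) list \<Rightarrow> 'k::field"
  assumes f: "An_rel n t f" and cw: "length cw = t" "edgew n cw"
    and uniq: "\<And>w. edgew n w \<Longrightarrow> length w = t \<Longrightarrow> run b n w {1..n} = Some T \<Longrightarrow> w = cw"
    and ex: "run b n cw {1..n} = Some T"
  shows "f cw = 0"
proof -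
  define g :: "nat set option \<Rightarrow> 'k" where "g = (\<lambda>x. if x = Some T then 1 else 0)"
  have fI: "f \<in> FK_ideal n" using f by (simp add: An_rel_def)
  have z: "(\<Sum>w\<in>Wd n t. f w * g (run b n w {1..n})) = 0"
    by (rule ideal_zero[OF fI]) (simp add: g_def)
  have "(\<Sum>w\<in>Wd n t. f w * g (run b n w {1..n})) = (\<Sum>w\<in>Wd n t. if w = cw then f cw else 0)"
  proof (intro sum.cong refl)
    fix w assume w: "w \<in> Wd n t"
    show "f w * g (run b n w {1..n}) = (if w = cw then f cw else 0)"
    proof (cases "f w = 0")
      case True thus ?thesis using ex by (auto simp: g_def)
    next
      case False
      hence "edgew n w" "length w = t" using f by (auto simp: An_rel_def edgew_def)
      thus ?thesis using uniq ex by (auto simp: g_def)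
    qed
  qed
  also have "\<dots> = f cw"
  proof -
    have "cw \<in> Wd n t" using cw edgew_Wd[OF cw(2)] by (simp add: Wd_def)
    thus ?thesis by (simp add: finite_Wd sum.delta')
  qed
  finally show ?thesis using z by simp
qed

lemma K_T:
  fixes f :: "(nat \<times> nat) list \<Rightarrow> 'k::field"
  assumes "An_rel n t f" "1 \<le> c" "c + t \<le> n"
  shows "f (map edgeA (rev [c..<c+t])) = 0"
  by (rule chain_sum[OF assms(1), where b=True and T="{1..n} - {c..<c+t}"])
     (use assms runT_uniq runT_ex in \<open>auto simp: edgew_def edgeA_def\<close>)

lemma K_F:
  fixes f :: "(nat \<times> nat) list \<Rightarrow> 'k::field"
  assumes "An_rel n t f" "1 \<le> c" "c + t \<le> n"
  shows "f (map edgeA [c..<c+t]) = 0"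
  by (rule chain_sum[OF assms(1), where b=False and T="{1..n} - {c+1..<c+t+1}"])
     (use assms runF_uniq runF_ex in \<open>auto simp: edgew_def edgeA_def\<close>)

lemma sandwich_nil: "sandwich [] r [] = r"
  by (simp add: sandwich_def fun_eq_iff)

lemma sandwich_R1: "sandwich [] r [x] w = (if w \<noteq> [] \<and> last w = x then r (butlast w) else 0)"
proof (cases w rule: rev_cases)
  case Nil thus ?thesis by (simp add: sandwich_def)
next
  case (snoc ys y) thus ?thesis by (simp add: sandwich_def)
qed

lemma sandwich_L1: "sandwich [x] r [] w = (if w \<noteq> [] \<and> hd w = x then r (tl w) else 0)"
  by (cases w) (auto simp: sandwich_def)

lemma sandwich_mono: "sandwich a (mono u :: ('l,'k::field) ncpoly) c = mono (a @ u @ c)"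
proof
  fix w
  show "sandwich a (mono u :: ('l,'k) ncpoly) c w = mono (a @ u @ c) w"
  proof (cases "sandwich a (mono u :: ('l,'k) ncpoly) c w = 0")
    case False
    define m where "m = take (length w - length a - length c) (drop (length a) w)"
    have m: "w = a @ m @ c" using sandwich_nz[OF False] unfolding m_def by (elim conjE)
    have "sandwich a (mono u :: ('l,'k) ncpoly) c w = mono u m" unfolding m by (rule sandwich_app)
    hence "mono u m \<noteq> (0::'k)" using False by simp
    hence "m = u" unfolding mono_def by (cases "m = u") auto
    thus ?thesis using m by (simp add: sandwich_app mono_def)
  next
    case True
    have "w \<noteq> a @ u @ c"
    proof
      assume "w = a @ u @ c"
      hence "sandwich a (mono u :: ('l,'k) ncpoly) c w = (1::'k)" by (simp add: sandwich_app mono_def)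
      thus False using True by simp
    qed
    thus ?thesis using True by (simp add: mono_def)
  qed
qed

lemma sandwich_diff: "sandwich a (\<lambda>w. f w - g w) c = (\<lambda>w. sandwich a f c w - sandwich a g c w)"
  by (simp add: sandwich_def fun_eq_iff)

lemma edgeA_inj: "edgeA a = edgeA b \<longleftrightarrow> a = b"
  by (simp add: edgeA_def)

lemma rel_sq:
  assumes "1 \<le> a" "a < n"
  shows "An_rel n 2 (mono [edgeA a, edgeA a] :: ((nat \<times> nat), 'k::field) ncpoly)"
proof -
  have "mono [(a, a+1), (a, a+1)] \<in> (FK_rels n :: ((nat \<times> nat), 'k) ncpoly set)"
    using assms by (intro FK_rels.sq) auto
  hence "sandwich [] (mono [(a, a+1), (a, a+1)]) [] \<in> (FK_ideal n :: ((nat \<times> nat), 'k) ncpoly set)"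
    by (rule FK_ideal.gen)
  hence "mono [edgeA a, edgeA a] \<in> (FK_ideal n :: ((nat \<times> nat), 'k) ncpoly set)"
    by (simp add: sandwich_nil edgeA_def)
  thus ?thesis unfolding An_rel_def using assms by (auto simp: mono_def split: if_splits)
qed


lemma An_rel_intro:
  assumes "f \<in> FK_ideal n" "\<And>w. f w \<noteq> 0 \<Longrightarrow> \<exists>xs. w = map edgeA xs \<and> length xs = t \<and> set xs \<subseteq> {1..<n}"
  shows "An_rel n t f"
  unfolding An_rel_def
proof (intro conjI allI impI assms(1))
  fix w assume "f w \<noteq> 0"
  then obtain xs where xs: "w = map edgeA xs" "length xs = t" "set xs \<subseteq> {1..<n}" using assms(2) by blast
  show "length w = t" using xs by simp
  show "\<forall>p\<in>set w. \<exists>a\<ge>1. a < n \<and> p = edgeA a"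
  proof
    fix p assume "p \<in> set w"
    then obtain x where "x \<in> set xs" "p = edgeA x" using xs by auto
    thus "\<exists>a\<ge>1. a < n \<and> p = edgeA a" using xs by (intro exI[of _ x]) auto
  qed
qed

lemma rel_comm:
  assumes "1 \<le> a" "a + 2 \<le> b" "b < n"
  shows "An_rel n 2 ((\<lambda>w. mono [edgeA a, edgeA b] w - mono [edgeA b, edgeA a] w) :: ((nat \<times> nat), 'k::field) ncpoly)"
proof (rule An_rel_intro)
  have "(\<lambda>w. mono [(a, a+1), (b, b+1)] w - mono [(b,b+1), (a, a+1)] w) \<in> (FK_rels n :: ((nat \<times> nat), 'k) ncpoly set)"
    using assms by (intro FK_rels.comm) (auto simp: is_gen_def)
  hence "sandwich [] (\<lambda>w. mono [(a, a+1), (b, b+1)] w - mono [(b,b+1), (a, a+1)] w) [] \<in> (FK_ideal n :: ((nat \<times> nat), 'k) ncpoly set)"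
    by (rule FK_ideal.gen)
  thus "(\<lambda>w. mono [edgeA a, edgeA b] w - mono [edgeA b, edgeA a] w) \<in> (FK_ideal n :: ((nat \<times> nat), 'k) ncpoly set)"
    by (simp add: sandwich_nil edgeA_def)
next
  fix w assume "(mono [edgeA a, edgeA b] w - mono [edgeA b, edgeA a] w :: 'k) \<noteq> 0"
  hence "w = map edgeA [a,b] \<or> w = map edgeA [b,a]" unfolding mono_def by (auto split: if_splits)
  thus "\<exists>xs. w = map edgeA xs \<and> length xs = 2 \<and> set xs \<subseteq> {1..<n}"
  proof (elim disjE)
    assume "w = map edgeA [a,b]" thus ?thesis using assms by (intro exI[of _ "[a,b]"]) auto
  next
    assume "w = map edgeA [b,a]" thus ?thesis using assms by (intro exI[of _ "[b,a]"]) auto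
  qed
qed

lemma rel_braid:
  assumes "1 \<le> a" "a + 2 \<le> n"
  shows "An_rel n 3 ((\<lambda>w. mono [edgeA a, edgeA (a+1), edgeA a] w - mono [edgeA (a+1), edgeA a, edgeA (a+1)] w) :: ((nat \<times> nat), 'k::field) ncpoly)"
proof -
  define P where "P = (a, a+1)"
  define Q where "Q = (a+1, a+2)"
  define S where "S = (a, a+2)"
  define T1 :: "((nat \<times> nat), 'k) ncpoly" where "T1 = (\<lambda>w. mono [P,Q] w - mono [Q,S] w - mono [S,P] w)"
  have T1: "T1 \<in> FK_rels n" unfolding T1_def P_def Q_def S_def
    using FK_rels.tri1[of a "a+1" "a+2" n] assms by simp
  have sP: "(mono [P,P] :: ((nat \<times> nat), 'k) ncpoly) \<in> FK_rels n" unfolding P_def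
    using assms by (intro FK_rels.sq) auto
  have sQ: "(mono [Q,Q] :: ((nat \<times> nat), 'k) ncpoly) \<in> FK_rels n" unfolding Q_def
    using assms by (intro FK_rels.sq) auto
  define F :: "((nat \<times> nat), 'k) ncpoly" where "F = (\<lambda>w. (\<lambda>w. sandwich [] T1 [P] w + sandwich [S] (mono [P,P]) [] w) w
     + (\<lambda>w. (-1) * (\<lambda>w. sandwich [Q] T1 [] w + sandwich [] (mono [Q,Q]) [S] w) w) w)"
  have FI: "F \<in> FK_ideal n" unfolding F_def
    by (intro FK_ideal.add FK_ideal.smult FK_ideal.gen T1 sP sQ)
  have PQ: "P \<noteq> Q" "P \<noteq> S" "Q \<noteq> S" by (auto simp: P_def Q_def S_def)
  have "F = (\<lambda>w. mono [P,Q,P] w - mono [Q,P,Q] w)"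
    unfolding F_def T1_def sandwich_diff sandwich_mono
    by (simp add: fun_eq_iff algebra_simps)
  hence "(\<lambda>w. mono [edgeA a, edgeA (a+1), edgeA a] w - mono [edgeA (a+1), edgeA a, edgeA (a+1)] w) \<in> (FK_ideal n :: ((nat \<times> nat), 'k) ncpoly set)"
    using FI by (simp add: P_def Q_def edgeA_def)
  thus ?thesis
  proof (rule An_rel_intro)
    fix w assume "(mono [edgeA a, edgeA (a+1), edgeA a] w - mono [edgeA (a+1), edgeA a, edgeA (a+1)] w :: 'k) \<noteq> 0"
    hence "w = map edgeA [a,a+1,a] \<or> w = map edgeA [a+1,a,a+1]" unfolding mono_def by (auto split: if_splits)
    thus "\<exists>xs. w = map edgeA xs \<and> length xs = 3 \<and> set xs \<subseteq> {1..<n}"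
    proof (elim disjE)
      assume "w = map edgeA [a,a+1,a]" thus ?thesis using assms by (intro exI[of _ "[a,a+1,a]"]) auto
    next
      assume "w = map edgeA [a+1,a,a+1]" thus ?thesis using assms by (intro exI[of _ "[a+1,a,a+1]"]) auto
    qed
  qed
qed

definition Us :: "nat \<Rightarrow> nat \<Rightarrow> nat list set" where
  "Us n t = {u. length u = t \<and> set u \<subseteq> {1..n - 1}}"

lemma finite_Us: "finite (Us n t)"
  unfolding Us_def using finite_lists_length_eq[of "{1..n-1}" t] by (simp add: conj_commute)

definition PP :: "(nat \<Rightarrow> nat \<Rightarrow> 'k::field) \<Rightarrow> nat \<Rightarrow> nat \<Rightarrow> nat list \<Rightarrow> 'k" where
  "PP v s t u = (\<Prod>j<t. v (s + t - 1 - j) (u ! j))"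

definition Pcond :: "'k itself \<Rightarrow> nat \<Rightarrow> nat \<Rightarrow> (nat \<Rightarrow> nat \<Rightarrow> 'k::field) \<Rightarrow> bool" where
  "Pcond _ n d v \<longleftrightarrow> (\<forall>(f :: ((nat \<times> nat), 'k) ncpoly) t s. An_rel n t f \<and> s + t \<le> d \<longrightarrow>
      (\<Sum>u\<in>Us n t. f (map edgeA u) * PP v s t u) = 0)"

definition pt :: "nat \<Rightarrow> (nat \<Rightarrow> nat \<Rightarrow> 'k::field) \<Rightarrow> nat \<Rightarrow> (nat \<Rightarrow> 'k) set" where
  "pt d v = (\<lambda>j. if j < d then ppt (v j) else {})"

lemma Pd_An_iff:
  "x \<in> Pd_An TYPE('k::field) n d \<longleftrightarrow> (\<exists>v. x = pt d v \<and> (\<forall>j<d. v j \<in> vecs (n - 1)) \<and> Pcond TYPE('k) n d v)"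
  unfolding Pd_An_def Pcond_def pt_def Us_def PP_def by blast

lemma map_edgeA_eq: "map edgeA x = map edgeA y \<longleftrightarrow> x = y"
proof -
  have "inj edgeA" by (auto simp: inj_on_def edgeA_def)
  thus ?thesis by (simp add: inj_map_eq_map)
qed

lemma sum_mono_U:
  assumes "w0 \<in> Us n t"
  shows "(\<Sum>u\<in>Us n t. mono (map edgeA w0) (map edgeA u) * h u) = (h w0 :: 'k::field)"
proof -
  have "(\<Sum>u\<in>Us n t. mono (map edgeA w0) (map edgeA u) * h u) = (\<Sum>u\<in>Us n t. if u = w0 then h w0 else 0)"
    by (intro sum.cong refl) (auto simp: mono_def map_edgeA_eq)
  also have "\<dots> = h w0" using assms finite_Us by (simp add: sum.delta')
  finally show ?thesis .
qed

lemma PP2: "PP v s 2 [x,y] = v (s+1) x * v s y"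
  by (simp add: PP_def numeral_2_eq_2)

lemma PP3: "PP v s 3 [x,y,z] = v (s+2) x * v (s+1) y * v s z"
  by (simp add: PP_def numeral_3_eq_3 mult.assoc)

lemma E1:
  assumes P: "Pcond TYPE('k::field) n d v" and "s + 2 \<le> d" "1 \<le> a" "a < n"
  shows "v (s+1) a * v s a = (0::'k)"
proof -
  have r: "An_rel n 2 (mono [edgeA a, edgeA a] :: ((nat \<times> nat), 'k) ncpoly)" using rel_sq assms by blast
  have "(\<Sum>u\<in>Us n 2. (mono [edgeA a, edgeA a] :: ((nat \<times> nat), 'k) ncpoly) (map edgeA u) * PP v s 2 u) = 0"
    using P r assms unfolding Pcond_def by blast
  moreover have "[a,a] \<in> Us n 2" using assms by (auto simp: Us_def)
  ultimately show ?thesis using sum_mono_U[of "[a,a]" n 2 "PP v s 2"] by (simp add: PP2)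
qed

lemma E2:
  assumes P: "Pcond TYPE('k::field) n d v" and "s + 2 \<le> d" "1 \<le> a" "a + 2 \<le> b" "b < n"
  shows "v (s+1) a * v s b = (v (s+1) b * v s a :: 'k)"
proof -
  have r: "An_rel n 2 ((\<lambda>w. mono [edgeA a, edgeA b] w - mono [edgeA b, edgeA a] w) :: ((nat \<times> nat), 'k) ncpoly)"
    using rel_comm assms by blast
  have z: "(\<Sum>u\<in>Us n 2. ((mono [edgeA a, edgeA b] (map edgeA u) - mono [edgeA b, edgeA a] (map edgeA u)) :: 'k) * PP v s 2 u) = 0"
    using P r assms unfolding Pcond_def by blast
  have "[a,b] \<in> Us n 2" "[b,a] \<in> Us n 2" using assms by (auto simp: Us_def)
  hence "(\<Sum>u\<in>Us n 2. ((mono [edgeA a, edgeA b] (map edgeA u) - mono [edgeA b, edgeA a] (map edgeA u)) :: 'k) * PP v s 2 u)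
      = PP v s 2 [a,b] - PP v s 2 [b,a]"
    using sum_mono_U[of "[a,b]" n 2 "PP v s 2"] sum_mono_U[of "[b,a]" n 2 "PP v s 2"]
    by (simp add: left_diff_distrib sum_subtractf)
  thus ?thesis using z by (simp add: PP2)
qed

lemma E3:
  assumes P: "Pcond TYPE('k::field) n d v" and "s + 3 \<le> d" "1 \<le> a" "a + 2 \<le> n"
  shows "v (s+2) a * v (s+1) (a+1) * v s a = (v (s+2) (a+1) * v (s+1) a * v s (a+1) :: 'k)"
proof -
  have r: "An_rel n 3 ((\<lambda>w. mono [edgeA a, edgeA (a+1), edgeA a] w - mono [edgeA (a+1), edgeA a, edgeA (a+1)] w) :: ((nat \<times> nat), 'k) ncpoly)"
    using rel_braid assms by blast
  have z: "(\<Sum>u\<in>Us n 3. ((mono [edgeA a, edgeA (a+1), edgeA a] (map edgeA u) - mono [edgeA (a+1), edgeA a, edgeA (a+1)] (map edgeA u)) :: 'k) * PP v s 3 u) = 0"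
    using P r assms unfolding Pcond_def by blast
  have "[a,a+1,a] \<in> Us n 3" "[a+1,a,a+1] \<in> Us n 3" using assms by (auto simp: Us_def)
  hence "(\<Sum>u\<in>Us n 3. ((mono [edgeA a, edgeA (a+1), edgeA a] (map edgeA u) - mono [edgeA (a+1), edgeA a, edgeA (a+1)] (map edgeA u)) :: 'k) * PP v s 3 u)
      = PP v s 3 [a,a+1,a] - PP v s 3 [a+1,a,a+1]"
    using sum_mono_U[of "[a,a+1,a]" n 3 "PP v s 3"] sum_mono_U[of "[a+1,a,a+1]" n 3 "PP v s 3"]
    by (simp add: left_diff_distrib sum_subtractf)
  thus ?thesis using z by (simp add: PP3)
qed

lemma vecs_supp: "w \<in> vecs m \<Longrightarrow> w i \<noteq> 0 \<Longrightarrow> 1 \<le> i \<and> i \<le> m"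
  by (auto simp: vecs_def)

lemma E1':
  assumes P: "Pcond TYPE('k::field) n d v" and "s + 2 \<le> d" and V: "\<forall>j<d. v j \<in> vecs (n - 1)"
  shows "v (s+1) a * v s a = (0::'k)"
proof (cases "1 \<le> a \<and> a < n")
  case True thus ?thesis using E1[OF P] assms by blast
next
  case False
  hence "v s a = 0" using vecs_supp[of "v s" "n-1" a] V assms(2) by force
  thus ?thesis by simp
qed

lemma E2':
  assumes P: "Pcond TYPE('k::field) n d v" and "s + 2 \<le> d" and V: "\<forall>j<d. v j \<in> vecs (n - 1)" and "a + 2 \<le> b"
  shows "v (s+1) a * v s b = (v (s+1) b * v s a :: 'k)"
proof (cases "1 \<le> a \<and> b < n")
  case True thus ?thesis using E2[OF P] assms by blast
next
  case False
  have V0: "v s \<in> vecs (n-1)" "v (s+1) \<in> vecs (n-1)" using V assms(2) by auto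
  show ?thesis
  proof (cases "1 \<le> a")
    case True
    hence "b \<ge> n" using False by auto
    hence "v s b = 0" "v (s+1) b = 0" using vecs_supp[OF V0(1), of b] vecs_supp[OF V0(2), of b] by force+
    thus ?thesis by simp
  next
    case False
    hence "v s a = 0" "v (s+1) a = 0" using vecs_supp[OF V0(1), of a] vecs_supp[OF V0(2), of a] by force+
    thus ?thesis by simp
  qed
qed

lemma E3':
  assumes P: "Pcond TYPE('k::field) n d v" and "s + 3 \<le> d" and V: "\<forall>j<d. v j \<in> vecs (n - 1)"
  shows "v (s+2) a * v (s+1) (a+1) * v s a = (v (s+2) (a+1) * v (s+1) a * v s (a+1) :: 'k)"
proof (cases "1 \<le> a \<and> a + 2 \<le> n")
  case True thus ?thesis using E3[OF P] assms by blast
next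
  case False
  have V0: "v s \<in> vecs (n-1)" "v (s+1) \<in> vecs (n-1)" using V assms(2) by auto
  show ?thesis
  proof (cases "1 \<le> a")
    case True
    hence "a + 1 > n - 1" using False by auto
    hence "v s (a+1) = 0" "v (s+1) (a+1) = 0" using vecs_supp[OF V0(1), of "a+1"] vecs_supp[OF V0(2), of "a+1"] by force+
    thus ?thesis by simp
  next
    case False
    hence "v s a = 0" "v (s+1) a = 0" using vecs_supp[OF V0(1), of a] vecs_supp[OF V0(2), of a] by force+
    thus ?thesis by simp
  qed
qed

definition atp :: "(nat \<Rightarrow> 'k::field) \<Rightarrow> nat \<Rightarrow> bool" where
  "atp w x \<longleftrightarrow> (\<forall>i. w i \<noteq> 0 \<longleftrightarrow> i = x)"

lemma atp_unique: "atp w a \<Longrightarrow> atp w b \<Longrightarrow> a = b"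
  unfolding atp_def by metis

lemma adj:
  fixes p q :: "nat \<Rightarrow> 'k::field"
  assumes e1: "\<forall>a. q a * p a = 0" and e2: "\<forall>a b. a + 2 \<le> b \<longrightarrow> q a * p b = q b * p a"
    and px: "p x \<noteq> 0" and qy: "q y \<noteq> 0"
  shows "y = x + 1 \<or> x = y + 1"
proof -
  have "x \<noteq> y" using e1 px qy by auto
  moreover have "\<not> x + 2 \<le> y"
  proof
    assume "x + 2 \<le> y"
    hence "q x * p y = q y * p x" using e2 by blast
    hence "p y \<noteq> 0" using px qy by auto
    thus False using e1 qy by auto
  qed
  moreover have "\<not> y + 2 \<le> x"
  proof
    assume "y + 2 \<le> x"
    hence "q y * p x = q x * p y" using e2 by blast
    hence "q x \<noteq> 0" using px qy by auto
    thus False using e1 px by auto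
  qed
  ultimately show ?thesis by arith
qed

lemma triple:
  fixes p q r :: "nat \<Rightarrow> 'k::field"
  assumes apq: "\<And>x y. p x \<noteq> 0 \<Longrightarrow> q y \<noteq> 0 \<Longrightarrow> y = x + 1 \<or> x = y + 1"
    and aqr: "\<And>x y. q x \<noteq> 0 \<Longrightarrow> r y \<noteq> 0 \<Longrightarrow> y = x + 1 \<or> x = y + 1"
    and br: "\<And>a. r a * q (a+1) * p a = r (a+1) * q a * p (a+1)"
    and np: "p x0 \<noteq> 0" and nq: "q y \<noteq> 0" and nr: "r z0 \<noteq> 0"
  shows "\<exists>x. (atp p x \<and> atp q (x+1) \<and> atp r (x+2)) \<or> (atp p (x+2) \<and> atp q (x+1) \<and> atp r x)"
proof -
  have py: "p y = 0" using apq[of y y] nq by auto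
  have ry: "r y = 0" using aqr[of y y] nq by auto
  have c1: "r (y-1) * p (y-1) = 0" if "1 \<le> y"
  proof -
    have "r (y-1) * q y * p (y-1) = r y * q (y-1) * p y" using br[of "y-1"] that by simp
    hence "r (y-1) * q y * p (y-1) = 0" using py by simp
    thus ?thesis using nq by simp
  qed
  have c2: "r (y+1) * p (y+1) = 0"
  proof -
    have "r y * q (y+1) * p y = r (y+1) * q y * p (y+1)" using br[of y] by simp
    hence "r (y+1) * q y * p (y+1) = 0" using py by simp
    thus ?thesis using nq by simp
  qed
  have pA: "\<And>i. p i \<noteq> 0 \<Longrightarrow> i + 1 = y \<or> i = y + 1" using apq nq by metis
  have rA: "\<And>i. r i \<noteq> 0 \<Longrightarrow> i = y + 1 \<or> i + 1 = y" using aqr nq by metis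
  have x0z0: "x0 \<noteq> z0"
  proof
    assume "x0 = z0"
    hence "r x0 * p x0 \<noteq> 0" using np nr by simp
    moreover from pA[OF np] have "x0 + 1 = y \<or> x0 = y + 1" .
    ultimately show False using c1 c2 by (auto simp: add.commute)
  qed
  from pA[OF np] rA[OF nr] x0z0 consider (inc) "x0 + 1 = y" "z0 = y + 1" | (dec) "x0 = y + 1" "z0 + 1 = y"
    by (metis add_right_cancel)
  thus ?thesis
  proof cases
    case inc
    have "atp p x0"
      unfolding atp_def
    proof (intro allI iffI)
      fix i assume "p i \<noteq> 0"
      moreover have "\<not> (i = y + 1)" using c2 \<open>p i \<noteq> 0\<close> inc nr by auto
      ultimately show "i = x0" using pA inc by force
    qed (use np in simp)
    moreover have "atp q (x0+1)"
      unfolding atp_def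
    proof (intro allI iffI)
      fix i assume qi: "q i \<noteq> 0"
      from apq[OF np qi] aqr[OF qi nr] show "i = x0 + 1" using inc by auto
    qed (use nq inc in simp)
    moreover have "atp r (x0+2)"
      unfolding atp_def
    proof (intro allI iffI)
      fix i assume ri: "r i \<noteq> 0"
      have "i \<noteq> x0" using c1 ri np inc by auto
      thus "i = x0 + 2" using rA[OF ri] inc by auto
    qed (use nr inc in simp)
    ultimately show ?thesis by blast
  next
    case dec
    have "atp r z0"
      unfolding atp_def
    proof (intro allI iffI)
      fix i assume "r i \<noteq> 0"
      moreover have "i \<noteq> y + 1" using c2 \<open>r i \<noteq> 0\<close> dec np by auto
      ultimately show "i = z0" using rA dec by force
    qed (use nr in simp)
    moreover have "atp q (z0+1)"
      unfolding atp_def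
    proof (intro allI iffI)
      fix i assume qi: "q i \<noteq> 0"
      from apq[OF np qi] aqr[OF qi nr] show "i = z0 + 1" using dec by auto
    qed (use nq dec in simp)
    moreover have "atp p (z0+2)"
      unfolding atp_def
    proof (intro allI iffI)
      fix i assume pi: "p i \<noteq> 0"
      have "i \<noteq> z0" using c1 pi nr dec by auto
      thus "i = z0 + 2" using pA[OF pi] dec by auto
    qed (use np dec in simp)
    ultimately show ?thesis by blast
  qed
qed

definition trip :: "(nat \<Rightarrow> 'k::field) \<Rightarrow> (nat \<Rightarrow> 'k) \<Rightarrow> (nat \<Rightarrow> 'k) \<Rightarrow> bool" where
  "trip p q r \<longleftrightarrow> (\<exists>x. (atp p x \<and> atp q (x+1) \<and> atp r (x+2)) \<or> (atp p (x+2) \<and> atp q (x+1) \<and> atp r x))"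

lemma chain:
  fixes v :: "nat \<Rightarrow> nat \<Rightarrow> 'k::field"
  assumes d: "3 \<le> d" and T: "\<And>s. s + 3 \<le> d \<Longrightarrow> trip (v s) (v (s+1)) (v (s+2))"
  shows "(\<exists>x. \<forall>j<d. atp (v j) (x + j)) \<or> (\<exists>X. \<forall>j<d. \<exists>y. atp (v j) y \<and> y + j = X)"
proof -
  have "trip (v 0) (v 1) (v 2)" using T[of 0] d by (simp add: numeral_2_eq_2)
  then obtain x where
    "(atp (v 0) x \<and> atp (v 1) (x+1) \<and> atp (v 2) (x+2)) \<or> (atp (v 0) (x+2) \<and> atp (v 1) (x+1) \<and> atp (v 2) x)"
    unfolding trip_def by blast
  thus ?thesis
  proof (elim disjE conjE)
    assume h: "atp (v 0) x" "atp (v 1) (x+1)" "atp (v 2) (x+2)"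
    have Q: "j + 2 < d \<longrightarrow> atp (v j) (x+j) \<and> atp (v (j+1)) (x+j+1) \<and> atp (v (j+2)) (x+j+2)" for j
    proof (induction j)
      case 0 thus ?case using h by (simp add: numeral_2_eq_2)
    next
      case (Suc j)
      show ?case
      proof
        assume j: "Suc j + 2 < d"
        hence IH: "atp (v (j+1)) (x+j+1)" "atp (v (j+2)) (x+j+2)" using Suc.IH by auto
        from T[of "j+1"] j obtain x' where
          "(atp (v (j+1)) x' \<and> atp (v (j+2)) (x'+1) \<and> atp (v (j+3)) (x'+2)) \<or> (atp (v (j+1)) (x'+2) \<and> atp (v (j+2)) (x'+1) \<and> atp (v (j+3)) x')"
          unfolding trip_def by (auto simp: numeral_3_eq_3 numeral_2_eq_2)
        thus "atp (v (Suc j)) (x + Suc j) \<and> atp (v (Suc j + 1)) (x + Suc j + 1) \<and> atp (v (Suc j + 2)) (x + Suc j + 2)"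
        proof (elim disjE conjE)
          assume a: "atp (v (j+1)) x'" "atp (v (j+2)) (x'+1)" "atp (v (j+3)) (x'+2)"
          have "x' = x + j + 1" using atp_unique[OF a(1) IH(1)] .
          thus ?thesis using IH a by (simp add: numeral_3_eq_3 numeral_2_eq_2)
        next
          assume a: "atp (v (j+1)) (x'+2)" "atp (v (j+2)) (x'+1)" "atp (v (j+3)) x'"
          have "x'+2 = x + j + 1" "x' + 1 = x + j + 2" using atp_unique[OF a(1) IH(1)] atp_unique[OF a(2) IH(2)] by auto
          thus ?thesis by simp
        qed
      qed
    qed
    have "\<forall>j<d. atp (v j) (x + j)"
    proof (intro allI impI)
      fix j assume "j < d"
      show "atp (v j) (x + j)"
      proof (cases "j + 2 < d")
        case True thus ?thesis using Q[of j] by simp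
      next
        case False
        hence "d - 3 + 2 < d" "j = d - 3 + 1 \<or> j = d - 3 + 2" using d \<open>j < d\<close> by auto
        thus ?thesis using Q[of "d-3"] d by (auto simp: add.assoc)
      qed
    qed
    thus ?thesis by blast
  next
    assume h: "atp (v 0) (x+2)" "atp (v 1) (x+1)" "atp (v 2) x"
    define X where "X = x + 2"
    have Q: "j + 2 < d \<longrightarrow> (\<exists>y. atp (v j) y \<and> y + j = X) \<and> (\<exists>y. atp (v (j+1)) y \<and> y + j + 1 = X) \<and> (\<exists>y. atp (v (j+2)) y \<and> y + j + 2 = X)" for j
    proof (induction j)
      case 0 thus ?case using h unfolding X_def by (auto simp: numeral_2_eq_2 intro!: exI)
    next
      case (Suc j)
      show ?case
      proof
        assume j: "Suc j + 2 < d"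
        then obtain y1 y2 where IH: "atp (v (j+1)) y1" "y1 + j + 1 = X" "atp (v (j+2)) y2" "y2 + j + 2 = X" using Suc.IH by auto
        from T[of "j+1"] j obtain x' where
          "(atp (v (j+1)) x' \<and> atp (v (j+2)) (x'+1) \<and> atp (v (j+3)) (x'+2)) \<or> (atp (v (j+1)) (x'+2) \<and> atp (v (j+2)) (x'+1) \<and> atp (v (j+3)) x')"
          unfolding trip_def by (auto simp: numeral_3_eq_3 numeral_2_eq_2)
        thus "(\<exists>y. atp (v (Suc j)) y \<and> y + Suc j = X) \<and> (\<exists>y. atp (v (Suc j + 1)) y \<and> y + Suc j + 1 = X) \<and> (\<exists>y. atp (v (Suc j + 2)) y \<and> y + Suc j + 2 = X)"
        proof (elim disjE conjE)
          assume a: "atp (v (j+1)) x'" "atp (v (j+2)) (x'+1)" "atp (v (j+3)) (x'+2)"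
          have "x' = y1" "x' + 1 = y2" using atp_unique[OF a(1) IH(1)] atp_unique[OF a(2) IH(3)] by auto
          thus ?thesis using IH by simp
        next
          assume a: "atp (v (j+1)) (x'+2)" "atp (v (j+2)) (x'+1)" "atp (v (j+3)) x'"
          have "x'+2 = y1" using atp_unique[OF a(1) IH(1)] .
          thus ?thesis using IH a by (auto simp: numeral_3_eq_3 numeral_2_eq_2 intro!: exI)
        qed
      qed
    qed
    have "\<forall>j<d. \<exists>y. atp (v j) y \<and> y + j = X"
    proof (intro allI impI)
      fix j assume "j < d"
      show "\<exists>y. atp (v j) y \<and> y + j = X"
      proof (cases "j + 2 < d")
        case True thus ?thesis using Q[of j] by simp
      next
        case False
        hence "d - 3 + 2 < d" "j = d - 3 + 1 \<or> j = d - 3 + 2" using d \<open>j < d\<close> by auto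
        thus ?thesis using Q[of "d-3"] d by (auto simp: add.assoc)
      qed
    qed
    thus ?thesis by blast
  qed
qed

lemma pd_vanish:
  fixes f :: "((nat \<times> nat), 'k::field) ncpoly" and v :: "nat \<Rightarrow> nat \<Rightarrow> 'k"
  assumes f: "An_rel n t f" and n: "1 \<le> n"
    and H: "\<And>u. u \<in> Us n t \<Longrightarrow> PP v s t u \<noteq> 0 \<Longrightarrow> \<exists>c. u = rev [c..<c+t] \<or> u = [c..<c+t]"
  shows "(\<Sum>u\<in>Us n t. f (map edgeA u) * PP v s t u) = 0"
proof (intro sum.neutral ballI)
  fix u assume u: "u \<in> Us n t"
  show "f (map edgeA u) * PP v s t u = 0"
  proof (cases "PP v s t u = 0")
    case False
    then obtain c where c: "u = rev [c..<c+t] \<or> u = [c..<c+t]" using H u by blast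
    show ?thesis
    proof (cases "t = 0")
      case True
      hence "u = map id [1..<1+t]" using u by (simp add: Us_def)
      hence "map edgeA u = map edgeA [1..<1+t]" by simp
      thus ?thesis using K_F[OF f order.refl] n True by simp
    next
      case False
      have cs: "c \<in> set u" "c + t - 1 \<in> set u" using c False by auto
      have "c \<ge> 1" "c + t - 1 \<le> n - 1" using cs u by (auto simp: Us_def)
      hence rng: "1 \<le> c" "c + t \<le> n" using n False by auto
      from c show ?thesis
      proof
        assume "u = rev [c..<c+t]" thus ?thesis using K_T[OF f rng] by simp
      next
        assume "u = [c..<c+t]" thus ?thesis using K_F[OF f rng] by simp
      qed
    qed
  qed simp
qed

lemma in_Pd:
  fixes v :: "nat \<Rightarrow> nat \<Rightarrow> 'k::field"
  assumes V: "\<forall>j<d. v j \<in> vecs (n - 1)" and n: "1 \<le> n"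
    and H: "\<And>s t u. s + t \<le> d \<Longrightarrow> 2 \<le> t \<Longrightarrow> u \<in> Us n t \<Longrightarrow> PP v s t u \<noteq> 0 \<Longrightarrow> \<exists>c. u = rev [c..<c+t] \<or> u = [c..<c+t]"
  shows "pt d v \<in> Pd_An TYPE('k) n d"
  unfolding Pd_An_iff
proof (intro exI conjI)
  show "Pcond TYPE('k) n d v"
    unfolding Pcond_def
  proof (intro allI impI, elim conjE)
    fix f :: "((nat \<times> nat), 'k) ncpoly" and t s
    assume f: "An_rel n t f" and st: "s + t \<le> d"
    show "(\<Sum>u\<in>Us n t. f (map edgeA u) * PP v s t u) = 0"
    proof (rule pd_vanish[OF f n])
      fix u assume u: "u \<in> Us n t" and nz: "PP v s t u \<noteq> 0"
      show "\<exists>c. u = rev [c..<c+t] \<or> u = [c..<c+t]"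
      proof (cases "2 \<le> t")
        case True show ?thesis by (rule H[OF st True u nz])
      next
        case False
        hence "t = 0 \<or> t = 1" by auto
        thus ?thesis
        proof
          assume "t = 0" thus ?thesis using u by (auto simp: Us_def)
        next
          assume t1: "t = 1"
          then obtain x where "u = [x]" using u by (auto simp: Us_def length_Suc_conv)
          thus ?thesis using t1 by (intro exI[of _ x]) simp
        qed
      qed
    qed
  qed
qed (insert V, auto)

definition ev :: "nat \<Rightarrow> nat \<Rightarrow> 'k::field" where
  "ev i = (\<lambda>k. if k = i then 1 else 0)"

lemma ev_vecs: "1 \<le> i \<Longrightarrow> i \<le> m \<Longrightarrow> ev i \<in> vecs m"
  by (auto simp: ev_def vecs_def)

lemma PP_nz: "PP v s t u \<noteq> 0 \<Longrightarrow> j < t \<Longrightarrow> v (s + t - 1 - j) (u ! j) \<noteq> (0::'k::field)"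
  unfolding PP_def by (auto simp: prod_zero_iff)

lemma inc_in:
  assumes "1 \<le> a" "a + d \<le> n"
  shows "pt d (\<lambda>j. ev (a + j)) \<in> Pd_An TYPE('k::field) n d"
proof (rule in_Pd)
  show "\<forall>j<d. (ev (a + j) :: nat \<Rightarrow> 'k) \<in> vecs (n - 1)" using assms by (auto intro: ev_vecs)
  show "1 \<le> n" using assms by simp
next
  fix s t u assume st: "s + t \<le> d" and u: "u \<in> Us n t" and nz: "PP (\<lambda>j. (ev (a + j) :: nat \<Rightarrow> 'k)) s t u \<noteq> 0"
  have "u ! j = a + (s + t - 1 - j)" if "j < t" for j
    using PP_nz[OF nz that] by (auto simp: ev_def split: if_splits)
  hence "u = rev [a+s..<a+s+t]" using u
    by (intro nth_equalityI) (auto simp: Us_def rev_nth)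
  thus "\<exists>c. u = rev [c..<c+t] \<or> u = [c..<c+t]" by auto
qed

lemma dec_in:
  assumes "d \<le> b" "b < n"
  shows "pt d (\<lambda>j. ev (b - j)) \<in> Pd_An TYPE('k::field) n d"
proof (rule in_Pd)
  show "\<forall>j<d. (ev (b - j) :: nat \<Rightarrow> 'k) \<in> vecs (n - 1)" using assms by (auto intro: ev_vecs)
  show "1 \<le> n" using assms by simp
next
  fix s t u assume st: "s + t \<le> d" and t2: "2 \<le> t" and u: "u \<in> Us n t" and nz: "PP (\<lambda>j. (ev (b - j) :: nat \<Rightarrow> 'k)) s t u \<noteq> 0"
  have "u ! j = b - (s + t - 1 - j)" if "j < t" for j
    using PP_nz[OF nz that] by (auto simp: ev_def split: if_splits)
  hence "u = [b - (s + t - 1)..<b - (s + t - 1) + t]" using u st assms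
    by (intro nth_equalityI) (auto simp: Us_def)
  thus "\<exists>c. u = rev [c..<c+t] \<or> u = [c..<c+t]" by auto
qed

lemma ppt_scale:
  assumes "c \<noteq> (0::'k::field)"
  shows "ppt (\<lambda>i. c * w i) = ppt w"
proof
  show "ppt (\<lambda>i. c * w i) \<subseteq> ppt w"
  proof
    fix z assume "z \<in> ppt (\<lambda>i. c * w i)"
    then obtain c' where "c' \<noteq> 0" "z = (\<lambda>i. c' * (c * w i))" by (auto simp: ppt_def)
    hence "z = (\<lambda>i. (c' * c) * w i)" "c' * c \<noteq> 0" using assms by (auto simp: mult.assoc)
    thus "z \<in> ppt w" unfolding ppt_def by blast
  qed
next
  show "ppt w \<subseteq> ppt (\<lambda>i. c * w i)"
  proof
    fix z assume "z \<in> ppt w"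
    then obtain c' where "c' \<noteq> 0" "z = (\<lambda>i. c' * w i)" by (auto simp: ppt_def)
    hence "z = (\<lambda>i. (c' / c) * (c * w i))" "c' / c \<noteq> 0" using assms by (auto simp: fun_eq_iff)
    thus "z \<in> ppt (\<lambda>i. c * w i)" unfolding ppt_def by blast
  qed
qed

lemma ppt_eq: "ppt u = ppt w \<Longrightarrow> \<exists>c. c \<noteq> (0::'k::field) \<and> w = (\<lambda>i. c * u i)"
proof -
  assume e: "ppt u = ppt w"
  have "w \<in> ppt w" unfolding ppt_def by (rule CollectI, rule exI[of _ 1]) simp
  hence "w \<in> ppt u" using e by simp
  thus ?thesis by (auto simp: ppt_def)
qed

lemma ppt_ev_inj: "ppt (ev a :: nat \<Rightarrow> 'k::field) = ppt (ev b) \<Longrightarrow> a = b"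
proof -
  assume "ppt (ev a :: nat \<Rightarrow> 'k) = ppt (ev b)"
  then obtain c :: 'k where "c \<noteq> 0" "ev b = (\<lambda>i. c * ev a i)" using ppt_eq by blast
  hence "ev b b = c * (ev a b :: 'k)" by metis
  thus "a = b" by (auto simp: ev_def split: if_splits)
qed

lemma atp_ev: "atp w x \<Longrightarrow> w = (\<lambda>i. w x * ev x i)"
  by (auto simp: atp_def ev_def fun_eq_iff)

lemma atp_ppt: "atp w x \<Longrightarrow> ppt w = ppt (ev x :: nat \<Rightarrow> 'k::field)"
proof -
  assume a: "atp w x"
  hence "w x \<noteq> 0" by (simp add: atp_def)
  moreover have "ppt w = ppt (\<lambda>i. w x * ev x i)" using atp_ev[OF a] by metis
  ultimately show ?thesis by (simp add: ppt_scale)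
qed

lemma vecs_nz: "w \<in> vecs m \<Longrightarrow> \<exists>i. w i \<noteq> 0"
  by (auto simp: vecs_def)

lemma Pd_trip:
  fixes v :: "nat \<Rightarrow> nat \<Rightarrow> 'k::field"
  assumes P: "Pcond TYPE('k) n d v" and V: "\<forall>j<d. v j \<in> vecs (n - 1)" and s: "s + 3 \<le> d"
  shows "trip (v s) (v (s+1)) (v (s+2))"
proof -
  have a1: "y = x + 1 \<or> x = y + 1" if "v s x \<noteq> 0" "v (s+1) y \<noteq> 0" for x y
  proof (rule adj[where p="v s" and q="v (s+1)", OF _ _ that])
    show "\<forall>a. v (s + 1) a * v s a = 0" using E1'[OF P _ V, of s] s by simp
    show "\<forall>a b. a + 2 \<le> b \<longrightarrow> v (s + 1) a * v s b = v (s + 1) b * v s a"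
    proof -
      have "s + 2 \<le> d" using s by simp
      thus ?thesis using E2'[OF P _ V, of s] by blast
    qed
  qed
  have a2: "y = x + 1 \<or> x = y + 1" if "v (s+1) x \<noteq> 0" "v (s+2) y \<noteq> 0" for x y
  proof (rule adj[where p="v (s+1)" and q="v (s+2)", OF _ _ that])
    show "\<forall>a. v (s + 2) a * v (s + 1) a = 0" using E1'[OF P _ V, of "s+1"] s by simp
    show "\<forall>a b. a + 2 \<le> b \<longrightarrow> v (s + 2) a * v (s + 1) b = v (s + 2) b * v (s + 1) a"
    proof -
      have "s + 1 + 2 \<le> d" using s by simp
      hence "\<And>a b. a + 2 \<le> b \<Longrightarrow> v (s + 1 + 1) a * v (s+1) b = v (s + 1 + 1) b * v (s+1) a"
        using E2'[OF P _ V, of "s+1"] by blast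
      thus ?thesis by (simp only: numeral_2_eq_2 add_Suc_right add_0_right One_nat_def) blast
    qed
  qed
  have "v s \<in> vecs (n-1)" "v (s+1) \<in> vecs (n-1)" "v (s+2) \<in> vecs (n-1)" using V s by auto
  then obtain x0 y0 z0 where "v s x0 \<noteq> 0" "v (s+1) y0 \<noteq> 0" "v (s+2) z0 \<noteq> 0"
    using vecs_nz by metis
  from triple[of "v s" "v (s+1)" "v (s+2)", OF a1 a2 _ this] E3'[OF P s V]
  show ?thesis unfolding trip_def by blast
qed

lemma Pd_ge3:
  assumes d3: "3 \<le> d" and n: "1 \<le> n"
  shows "Pd_An TYPE('k::field) n d = (\<lambda>a. pt d (\<lambda>j. ev (a+j))) ` {1..n-d} \<union> (\<lambda>b. pt d (\<lambda>j. ev (b-j))) ` {d..n-1}"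
proof
  show "(\<lambda>a. pt d (\<lambda>j. ev (a+j))) ` {1..n-d} \<union> (\<lambda>b. pt d (\<lambda>j. ev (b-j))) ` {d..n-1} \<subseteq> Pd_An TYPE('k::field) n d"
  proof (intro Un_least image_subsetI)
    fix a assume "a \<in> {1..n-d}" thus "pt d (\<lambda>j. ev (a+j)) \<in> Pd_An TYPE('k::field) n d" by (intro inc_in) auto
  next
    fix b assume "b \<in> {d..n-1}" thus "pt d (\<lambda>j. ev (b-j)) \<in> Pd_An TYPE('k::field) n d" using n by (intro dec_in) auto
  qed
next
  show "Pd_An TYPE('k::field) n d \<subseteq> (\<lambda>a. pt d (\<lambda>j. ev (a+j))) ` {1..n-d} \<union> (\<lambda>b. pt d (\<lambda>j. ev (b-j))) ` {d..n-1}"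
  proof
    fix z assume "z \<in> Pd_An TYPE('k::field) n d"
    then obtain v :: "nat \<Rightarrow> nat \<Rightarrow> 'k" where z: "z = pt d v" and V: "\<forall>j<d. v j \<in> vecs (n - 1)" and P: "Pcond TYPE('k) n d v"
      unfolding Pd_An_iff by blast
    have "(\<exists>x. \<forall>j<d. atp (v j) (x + j)) \<or> (\<exists>X. \<forall>j<d. \<exists>y. atp (v j) y \<and> y + j = X)"
      by (rule chain[OF d3 Pd_trip[OF P V]])
    thus "z \<in> (\<lambda>a. pt d (\<lambda>j. ev (a+j))) ` {1..n-d} \<union> (\<lambda>b. pt d (\<lambda>j. ev (b-j))) ` {d..n-1}"
    proof (elim disjE exE)
      fix x assume h: "\<forall>j<d. atp (v j) (x + j)"
      have "v 0 x \<noteq> 0" "v (d-1) (x + (d-1)) \<noteq> 0" using h[rule_format, of 0] h[rule_format, of "d-1"] d3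
        by (auto simp: atp_def)
      hence "1 \<le> x" "x + (d - 1) \<le> n - 1" using vecs_supp V d3 by (metis add_0_right diff_less less_le_trans numeral_3_eq_3 zero_less_Suc zero_less_one)+
      hence xr: "x \<in> {1..n-d}" using d3 by auto
      have "z = pt d (\<lambda>j. ev (x+j))" unfolding z pt_def
        using h atp_ppt by (auto simp: fun_eq_iff)
      thus ?thesis using xr by blast
    next
      fix X assume h: "\<forall>j<d. \<exists>y. atp (v j) y \<and> y + j = X"
      have h': "atp (v j) (X - j) \<and> j \<le> X" if "j < d" for j
        using h that by (metis add_diff_cancel_right' le_add2)
      have "v 0 X \<noteq> 0" "v (d-1) (X - (d-1)) \<noteq> 0" using h'[of 0] h'[of "d-1"] d3 by (auto simp: atp_def)
      hence "X \<le> n - 1" "1 \<le> X - (d-1)" using vecs_supp V d3 by (metis diff_less less_le_trans numeral_3_eq_3 zero_less_Suc zero_less_one)+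
      hence Xr: "X \<in> {d..n-1}" using d3 by auto
      have "z = pt d (\<lambda>j. ev (X-j))" unfolding z pt_def
        using h' atp_ppt by (auto simp: fun_eq_iff)
      thus ?thesis using Xr by blast
    qed
  qed
qed

lemma card_chains:
  assumes d2: "2 \<le> d" and n: "1 \<le> n"
  shows "card ((\<lambda>a. pt d (\<lambda>j. ev (a+j) :: nat \<Rightarrow> 'k::field)) ` {1..n-d} \<union> (\<lambda>b. pt d (\<lambda>j. ev (b-j) :: nat \<Rightarrow> 'k)) ` {d..n-1})
     = (n - d) + (n - d)"
proof -
  have inj1: "inj_on (\<lambda>a. pt d (\<lambda>j. ev (a+j) :: nat \<Rightarrow> 'k)) {1..n-d}"
  proof (rule inj_onI)
    fix a b assume "pt d (\<lambda>j. ev (a+j) :: nat \<Rightarrow> 'k) = pt d (\<lambda>j. ev (b+j))"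
    hence "ppt (ev a :: nat \<Rightarrow> 'k) = ppt (ev b)" using d2 unfolding pt_def by (metis (no_types, lifting) add_0_right less_le_trans pos2)
    thus "a = b" by (rule ppt_ev_inj)
  qed
  have inj2: "inj_on (\<lambda>b. pt d (\<lambda>j. ev (b-j) :: nat \<Rightarrow> 'k)) {d..n-1}"
  proof (rule inj_onI)
    fix a b assume "pt d (\<lambda>j. ev (a-j) :: nat \<Rightarrow> 'k) = pt d (\<lambda>j. ev (b-j))"
    hence "ppt (ev a :: nat \<Rightarrow> 'k) = ppt (ev b)" using d2 unfolding pt_def by (metis (no_types, lifting) diff_zero less_le_trans pos2)
    thus "a = b" by (rule ppt_ev_inj)
  qed
  have disj: "(\<lambda>a. pt d (\<lambda>j. ev (a+j) :: nat \<Rightarrow> 'k)) ` {1..n-d} \<inter> (\<lambda>b. pt d (\<lambda>j. ev (b-j) :: nat \<Rightarrow> 'k)) ` {d..n-1} = {}"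
  proof (rule ccontr)
    assume "\<not> ?thesis"
    then obtain a b where ab: "pt d (\<lambda>j. ev (a+j) :: nat \<Rightarrow> 'k) = pt d (\<lambda>j. ev (b-j))" by blast
    have "ppt (ev a :: nat \<Rightarrow> 'k) = ppt (ev b)" using ab d2 unfolding pt_def
      by (metis (no_types, lifting) add_0_right diff_zero less_le_trans pos2)
    moreover have "ppt (ev (a+1) :: nat \<Rightarrow> 'k) = ppt (ev (b-1))" using ab d2 unfolding pt_def
      by (metis (no_types, lifting) One_nat_def Suc_1 Suc_le_lessD)
    ultimately have "a = b" "a + 1 = b - 1" using ppt_ev_inj by blast+
    thus False by simp
  qed
  show ?thesis
    using card_Un_disjoint[OF _ _ disj] card_image[OF inj1] card_image[OF inj2] n by simp
qed

lemma pair_struct: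
  fixes p q :: "nat \<Rightarrow> 'k::field"
  assumes e1: "\<forall>a. q a * p a = 0" and e2: "\<forall>a b. a + 2 \<le> b \<longrightarrow> q a * p b = q b * p a"
    and px: "p x \<noteq> 0" and qy: "q y \<noteq> 0"
  shows "(\<exists>y. atp q y \<and> (\<forall>i. p i \<noteq> 0 \<longrightarrow> i + 1 = y \<or> i = y + 1)) \<or>
         (\<exists>x. atp p x \<and> (\<forall>i. q i \<noteq> 0 \<longrightarrow> i = x + 1 \<or> x = i + 1))"
proof (cases "\<forall>y'. q y' \<noteq> 0 \<longrightarrow> y' = y")
  case True
  have "atp q y" unfolding atp_def using True qy by blast
  moreover have "\<forall>i. p i \<noteq> 0 \<longrightarrow> i + 1 = y \<or> i = y + 1"
    using adj[OF e1 e2 _ qy] by auto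
  ultimately show ?thesis by blast
next
  case False
  then obtain y' where y': "q y' \<noteq> 0" "y' \<noteq> y" by blast
  have A: "\<And>i j. p i \<noteq> 0 \<Longrightarrow> q j \<noteq> 0 \<Longrightarrow> j = i + 1 \<or> i = j + 1" using adj[OF e1 e2] by blast
  have "atp p x" unfolding atp_def
  proof (intro allI iffI)
    fix i assume "p i \<noteq> 0"
    from A[OF this qy] A[OF this y'(1)] A[OF px qy] A[OF px y'(1)] y'(2) show "i = x" by auto
  qed (use px in simp)
  moreover have "\<forall>i. q i \<noteq> 0 \<longrightarrow> i = x + 1 \<or> x = i + 1" using A[OF px] by blast
  ultimately show ?thesis by blast
qed

definition Lm :: "nat \<Rightarrow> 'k::field \<times> 'k \<Rightarrow> (nat \<Rightarrow> 'k) set" where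
  "Lm a = (\<lambda>(s,t). ppt (\<lambda>i. s * ev (a-1) i + t * ev (a+1) i))"

definition Km :: "nat \<Rightarrow> 'k::field \<times> 'k \<Rightarrow> (nat \<Rightarrow> 'k) set" where
  "Km a = (\<lambda>_. ppt (ev a))"

definition Cset :: "('k::field \<times> 'k \<Rightarrow> (nat \<Rightarrow> 'k) set) \<Rightarrow> ('k \<times> 'k \<Rightarrow> (nat \<Rightarrow> 'k) set) \<Rightarrow> (nat \<Rightarrow> (nat \<Rightarrow> 'k) set) set" where
  "Cset F G = {(\<lambda>j. if j = 0 then F (s,t) else if j = 1 then G (s,t) else {}) | s t. (s,t) \<noteq> (0,0)}"

definition Cc :: "nat \<Rightarrow> nat \<Rightarrow> (nat \<Rightarrow> (nat \<Rightarrow> 'k::field) set) set" where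
  "Cc n i = (if i < n - 3 then Cset (Lm (i+2)) (Km (i+2)) else Cset (Km (i - (n-3) + 2)) (Lm (i - (n-3) + 2)))"

lemma line_Lm: "2 \<le> a \<Longrightarrow> a + 2 \<le> n \<Longrightarrow> line_map (n-1) (Lm a :: 'k::field \<times> 'k \<Rightarrow> _)"
  unfolding line_map_def
proof (intro exI conjI allI impI)
  fix i assume "a \<ge> 2" "a + 2 \<le> n" "(ev (a-1) i :: 'k) \<noteq> 0 \<or> (ev (a+1) i :: 'k) \<noteq> 0"
  thus "i \<in> {1..n-1}" by (auto simp: ev_def split: if_splits)
next
  fix s t :: 'k assume "a \<ge> 2" and h: "\<forall>i. s * ev (a-1) i + t * ev (a+1) i = 0"
  from h[rule_format, of "a-1"] h[rule_format, of "a+1"] \<open>a \<ge> 2\<close>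
  show "s = 0" "t = 0" by (auto simp: ev_def split: if_splits)
qed (simp add: Lm_def)

lemma const_Km: "1 \<le> a \<Longrightarrow> a \<le> n - 1 \<Longrightarrow> const_map (n-1) (Km a :: 'k::field \<times> 'k \<Rightarrow> _)"
  unfolding const_map_def Km_def by (intro bexI[of _ "ev a"] ev_vecs refl)

lemma P1_1: "2 \<le> a \<Longrightarrow> a + 2 \<le> n \<Longrightarrow> is_P1_copy (n-1) (Cset (Lm a) (Km a) :: (nat \<Rightarrow> (nat \<Rightarrow> 'k::field) set) set)"
proof -
  assume "2 \<le> a" "a + 2 \<le> n"
  hence "line_map (n-1) (Lm a :: 'k \<times> 'k \<Rightarrow> _)" "const_map (n-1) (Km a :: 'k \<times> 'k \<Rightarrow> _)"
  proof -
    have "1 \<le> a" "a \<le> n - 1" using \<open>2 \<le> a\<close> \<open>a + 2 \<le> n\<close> by arith+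
    thus "line_map (n-1) (Lm a :: 'k \<times> 'k \<Rightarrow> _)" "const_map (n-1) (Km a :: 'k \<times> 'k \<Rightarrow> _)"
      using line_Lm[of a n] const_Km[of a n] \<open>2 \<le> a\<close> \<open>a + 2 \<le> n\<close> by auto
  qed
  thus ?thesis unfolding is_P1_copy_def Cset_def by blast
qed

lemma P1_2: "2 \<le> a \<Longrightarrow> a + 2 \<le> n \<Longrightarrow> is_P1_copy (n-1) (Cset (Km a) (Lm a) :: (nat \<Rightarrow> (nat \<Rightarrow> 'k::field) set) set)"
proof -
  assume "2 \<le> a" "a + 2 \<le> n"
  hence "line_map (n-1) (Lm a :: 'k \<times> 'k \<Rightarrow> _)" "const_map (n-1) (Km a :: 'k \<times> 'k \<Rightarrow> _)"
  proof -
    have "1 \<le> a" "a \<le> n - 1" using \<open>2 \<le> a\<close> \<open>a + 2 \<le> n\<close> by arith+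
    thus "line_map (n-1) (Lm a :: 'k \<times> 'k \<Rightarrow> _)" "const_map (n-1) (Km a :: 'k \<times> 'k \<Rightarrow> _)"
      using line_Lm[of a n] const_Km[of a n] \<open>2 \<le> a\<close> \<open>a + 2 \<le> n\<close> by auto
  qed
  thus ?thesis unfolding is_P1_copy_def Cset_def by blast
qed

lemma in_Cset:
  assumes "(s,t) \<noteq> (0,0)" "ppt (v 0) = F (s,t)" "ppt (v 1) = G (s,t)"
  shows "pt 2 v \<in> Cset F G"
  unfolding Cset_def pt_def
  by (rule CollectI, rule exI[of _ s], rule exI[of _ t]) (use assms in \<open>auto simp: fun_eq_iff\<close>)

lemma Cset_elim:
  assumes "z \<in> Cset F G"
  obtains s t where "(s,t) \<noteq> (0,0)" "z 0 = F (s,t)" "z 1 = G (s,t)"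
proof -
  from assms obtain s t where "(s,t) \<noteq> (0,0)" "z = (\<lambda>j. if j = 0 then F (s,t) else if j = 1 then G (s,t) else {})"
    unfolding Cset_def by blast
  thus ?thesis using that by simp
qed

lemma lv_eq:
  assumes "1 \<le> a" "\<forall>k. w k \<noteq> 0 \<longrightarrow> k = a - 1 \<or> k = a + 1"
  shows "w = (\<lambda>k. w (a-1) * ev (a-1) k + w (a+1) * ev (a+1) k)"
proof
  fix k show "w k = w (a-1) * ev (a-1) k + w (a+1) * ev (a+1) k"
    using assms by (cases "k = a - 1"; cases "k = a + 1") (auto simp: ev_def)
qed

lemma Lm_10: "1 \<le> a \<Longrightarrow> Lm a (1,0) = ppt (ev (a-1) :: nat \<Rightarrow> 'k::field)"
  by (simp add: Lm_def)

lemma Lm_01: "Lm a (0,1) = ppt (ev (a+1) :: nat \<Rightarrow> 'k::field)"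
  by (simp add: Lm_def)

lemma Lm_ne_ev:
  assumes "1 \<le> a"
  shows "Lm a (1,1) \<noteq> ppt (ev b :: nat \<Rightarrow> 'k::field)"
proof
  assume "Lm a (1,1) = ppt (ev b :: nat \<Rightarrow> 'k)"
  hence "ppt (\<lambda>i. ev (a-1) i + ev (a+1) i) = ppt (ev b :: nat \<Rightarrow> 'k)" by (simp add: Lm_def)
  then obtain c :: 'k where c: "c \<noteq> 0" "ev b = (\<lambda>i. c * (ev (a-1) i + ev (a+1) i))" using ppt_eq by blast
  have "ev b (a-1) = c * (ev (a-1) (a-1) + ev (a+1) (a-1))" "ev b (a+1) = c * (ev (a-1) (a+1) + ev (a+1) (a+1))"
    using c(2) by metis+
  thus False using c(1) assms by (auto simp: ev_def split: if_splits)
qed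

lemma rev2: "rev [c..<c+2] = [c+1, c]" by (simp add: numeral_2_eq_2)
lemma upt2: "[c..<c+2] = [c, c+1]" by (simp add: numeral_2_eq_2)

lemma Us2: "u \<in> Us n 2 \<Longrightarrow> \<exists>x y. u = [x,y]"
  by (auto simp: Us_def numeral_2_eq_2 length_Suc_conv)

lemma lvec_vecs:
  assumes "2 \<le> a" "a + 2 \<le> n" "(s,t) \<noteq> (0,0)"
  shows "(\<lambda>i. s * ev (a-1) i + t * ev (a+1) i :: 'k::field) \<in> vecs (n-1)"
  unfolding vecs_def
proof (intro CollectI conjI allI impI)
  fix i assume "s * ev (a-1) i + t * ev (a+1) i \<noteq> (0::'k)"
  thus "i \<in> {1..n-1}" using assms by (auto simp: ev_def split: if_splits)
next
  show "\<exists>i. s * ev (a-1) i + t * ev (a+1) i \<noteq> (0::'k)"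
  proof (cases "s = 0")
    case True hence "t \<noteq> 0" using assms by auto
    thus ?thesis using True by (intro exI[of _ "a+1"]) (simp add: ev_def)
  next
    case False thus ?thesis using assms by (intro exI[of _ "a-1"]) (simp add: ev_def)
  qed
qed

lemma lvec_nz: "(s * ev (a-1) i + t * ev (a+1) i :: 'k::field) \<noteq> 0 \<Longrightarrow> i = a - 1 \<or> i = a + 1"
  by (auto simp: ev_def split: if_splits)

lemma type1_in:
  assumes a: "2 \<le> a" "a + 2 \<le> n" and st: "(s,t) \<noteq> (0,0)"
  shows "pt 2 (\<lambda>j. if j = 0 then (\<lambda>i. s * ev (a-1) i + t * ev (a+1) i) else ev a) \<in> Pd_An TYPE('k::field) n 2"
proof (rule in_Pd)
  show "\<forall>j<2. (if j = 0 then (\<lambda>i. s * ev (a-1) i + t * ev (a+1) i) else ev a :: nat \<Rightarrow> 'k) \<in> vecs (n - 1)"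
    using lvec_vecs[OF a st] a by (auto intro!: ev_vecs)
  show "1 \<le> n" using a by simp
next
  fix s' t' u assume st': "s' + t' \<le> 2" "2 \<le> t'" and u: "u \<in> Us n t'"
    and nz: "PP (\<lambda>j. if j = 0 then (\<lambda>i. s * ev (a-1) i + t * ev (a+1) i) else ev a :: nat \<Rightarrow> 'k) s' t' u \<noteq> 0"
  have t2: "t' = 2" "s' = 0" using st' by auto
  obtain x y where xy: "u = [x,y]" using Us2 u t2 by blast
  have "(ev a x :: 'k) * (s * ev (a-1) y + t * ev (a+1) y) \<noteq> 0" using nz unfolding xy t2 PP2 by simp
  hence "x = a" "y = a - 1 \<or> y = a + 1" using lvec_nz[of s a y t] by (auto simp: ev_def split: if_splits)
  moreover have "a - 1 + 1 = a" using a by simp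
  ultimately have "u = rev [a-1..<a-1+2] \<or> u = [a..<a+2]" unfolding xy rev2 upt2 by auto
  thus "\<exists>c. u = rev [c..<c+t'] \<or> u = [c..<c+t']" using t2 by blast
qed

lemma type2_in:
  assumes a: "2 \<le> a" "a + 2 \<le> n" and st: "(s,t) \<noteq> (0,0)"
  shows "pt 2 (\<lambda>j. if j = 0 then ev a else (\<lambda>i. s * ev (a-1) i + t * ev (a+1) i)) \<in> Pd_An TYPE('k::field) n 2"
proof (rule in_Pd)
  show "\<forall>j<2. (if j = 0 then ev a else (\<lambda>i. s * ev (a-1) i + t * ev (a+1) i) :: nat \<Rightarrow> 'k) \<in> vecs (n - 1)"
    using lvec_vecs[OF a st] a by (auto intro!: ev_vecs)
  show "1 \<le> n" using a by simp
next
  fix s' t' u assume st': "s' + t' \<le> 2" "2 \<le> t'" and u: "u \<in> Us n t'"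
    and nz: "PP (\<lambda>j. if j = 0 then ev a else (\<lambda>i. s * ev (a-1) i + t * ev (a+1) i) :: nat \<Rightarrow> 'k) s' t' u \<noteq> 0"
  have t2: "t' = 2" "s' = 0" using st' by auto
  obtain x y where xy: "u = [x,y]" using Us2 u t2 by blast
  have "(s * ev (a-1) x + t * ev (a+1) x) * (ev a y :: 'k) \<noteq> 0" using nz unfolding xy t2 PP2 by simp
  hence "y = a" "x = a - 1 \<or> x = a + 1" using lvec_nz[of s a x t] by (auto simp: ev_def split: if_splits)
  moreover have "a - 1 + 1 = a" using a by simp
  ultimately have "u = [a-1..<a-1+2] \<or> u = rev [a..<a+2]" unfolding xy rev2 upt2 by auto
  thus "\<exists>c. u = rev [c..<c+t'] \<or> u = [c..<c+t']" using t2 by blast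
qed

lemma Cset1_sub:
  assumes "2 \<le> a" "a + 2 \<le> n"
  shows "Cset (Lm a) (Km a) \<subseteq> Pd_An TYPE('k::field) n 2"
proof
  fix z :: "nat \<Rightarrow> (nat \<Rightarrow> 'k) set" assume "z \<in> Cset (Lm a) (Km a)"
  then obtain s t :: 'k where st: "(s,t) \<noteq> (0,0)" and z: "z = (\<lambda>j. if j = 0 then Lm a (s,t) else if j = 1 then Km a (s,t) else {})"
    unfolding Cset_def by blast
  have "z = pt 2 (\<lambda>j. if j = 0 then (\<lambda>i. s * ev (a-1) i + t * ev (a+1) i) else ev a)"
    unfolding z pt_def by (auto simp: fun_eq_iff Lm_def Km_def)
  thus "z \<in> Pd_An TYPE('k) n 2" using type1_in[OF assms st] by simp
qed

lemma Cset2_sub: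
  assumes "2 \<le> a" "a + 2 \<le> n"
  shows "Cset (Km a) (Lm a) \<subseteq> Pd_An TYPE('k::field) n 2"
proof
  fix z :: "nat \<Rightarrow> (nat \<Rightarrow> 'k) set" assume "z \<in> Cset (Km a) (Lm a)"
  then obtain s t :: 'k where st: "(s,t) \<noteq> (0,0)" and z: "z = (\<lambda>j. if j = 0 then Km a (s,t) else if j = 1 then Lm a (s,t) else {})"
    unfolding Cset_def by blast
  have "z = pt 2 (\<lambda>j. if j = 0 then ev a else (\<lambda>i. s * ev (a-1) i + t * ev (a+1) i))"
    unfolding z pt_def by (auto simp: fun_eq_iff Lm_def Km_def)
  thus "z \<in> Pd_An TYPE('k) n 2" using type2_in[OF assms st] by simp
qed

lemma Cc_sub:
  assumes "3 < n" "i < 2 * n - 6"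
  shows "Cc n i \<subseteq> Pd_An TYPE('k::field) n 2"
proof (cases "i < n - 3")
  case True
  have h: "2 \<le> i + 2" "i + 2 + 2 \<le> n" using True assms by auto
  show ?thesis using Cset1_sub[where 'k='k, OF h] True by (simp add: Cc_def)
next
  case False
  have h: "2 \<le> i - (n-3) + 2" "i - (n-3) + 2 + 2 \<le> n" using False assms by auto
  show ?thesis using Cset2_sub[where 'k='k, OF h] False by (simp add: Cc_def)
qed

lemma atp_intro: "(\<forall>i. w i \<noteq> 0 \<longrightarrow> i = x) \<Longrightarrow> w y \<noteq> 0 \<Longrightarrow> atp w x"
  unfolding atp_def by metis

lemma idx1: "b + 4 \<le> n \<Longrightarrow> Cc n b = Cset (Lm (b+2)) (Km (b+2)) \<and> b < 2 * n - 6"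
  by (simp add: Cc_def) arith

lemma idx2: "b + 4 \<le> n \<Longrightarrow> Cc n (n - 3 + b) = Cset (Km (b+2)) (Lm (b+2)) \<and> n - 3 + b < 2 * n - 6"
  by (simp add: Cc_def) arith

lemma in_U1: "2 \<le> a \<Longrightarrow> a + 2 \<le> n \<Longrightarrow> z \<in> Cset (Lm a) (Km a) \<Longrightarrow> z \<in> (\<Union>i<2*n-6. Cc n i)"
proof -
  assume a: "2 \<le> a" "a + 2 \<le> n" "z \<in> Cset (Lm a) (Km a)"
  then obtain b where b: "a = b + 2" by (metis le_add_diff_inverse2)
  thus ?thesis using idx1[of b n] a by auto
qed

lemma in_U2: "2 \<le> a \<Longrightarrow> a + 2 \<le> n \<Longrightarrow> z \<in> Cset (Km a) (Lm a) \<Longrightarrow> z \<in> (\<Union>i<2*n-6. Cc n i)"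
proof -
  assume a: "2 \<le> a" "a + 2 \<le> n" "z \<in> Cset (Km a) (Lm a)"
  then obtain b where b: "a = b + 2" by (metis le_add_diff_inverse2)
  thus ?thesis using idx2[of b n] a by auto
qed

lemma pair_facts:
  fixes v :: "nat \<Rightarrow> nat \<Rightarrow> 'k::field"
  assumes P: "Pcond TYPE('k) n 2 v" and V: "\<forall>j<2. v j \<in> vecs (n - 1)"
  shows "(\<exists>y. atp (v 1) y \<and> (\<forall>i. v 0 i \<noteq> 0 \<longrightarrow> i + 1 = y \<or> i = y + 1)) \<or>
         (\<exists>x. atp (v 0) x \<and> (\<forall>i. v 1 i \<noteq> 0 \<longrightarrow> i = x + 1 \<or> x = i + 1))"
proof -
  have e1: "\<forall>a. v 1 a * v 0 a = 0" using E1'[OF P _ V, of 0] by simp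
  have e2: "\<forall>a b. a + 2 \<le> b \<longrightarrow> v 1 a * v 0 b = v 1 b * v 0 a"
  proof -
    have h: "0 + 2 \<le> (2::nat)" by simp
    have "\<forall>a b. a + 2 \<le> b \<longrightarrow> v (0+1) a * v 0 b = v (0+1) b * v 0 a" using E2'[OF P h V] by blast
    thus ?thesis by (simp only: add_0_left)
  qed
  have "v 0 \<in> vecs (n-1)" "v 1 \<in> vecs (n-1)" using V by auto
  then obtain x y where "v 0 x \<noteq> 0" "v 1 y \<noteq> 0" using vecs_nz by metis
  from pair_struct[OF e1 e2 this] show ?thesis .
qed

lemma Pd2_sub:
  assumes n: "3 < n"
  shows "Pd_An TYPE('k::field) n 2 \<subseteq> (\<Union>i<2*n-6. Cc n i)"
proof
  fix z assume "z \<in> Pd_An TYPE('k::field) n 2"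
  then obtain v :: "nat \<Rightarrow> nat \<Rightarrow> 'k" where z: "z = pt 2 v" and V: "\<forall>j<2. v j \<in> vecs (n - 1)" and P: "Pcond TYPE('k) n 2 v"
    unfolding Pd_An_iff by blast
  have V0: "v 0 \<in> vecs (n-1)" and V1: "v 1 \<in> vecs (n-1)" using V by auto
  from pair_facts[OF P V] show "z \<in> (\<Union>i<2*n-6. Cc n i)"
  proof (elim disjE exE conjE)
    fix y assume q: "atp (v 1) y" and p: "\<forall>i. v 0 i \<noteq> 0 \<longrightarrow> i + 1 = y \<or> i = y + 1"
    have yr: "1 \<le> y" "y \<le> n - 1" using vecs_supp[OF V1, of y] q by (auto simp: atp_def)
    obtain x0 where x0: "v 0 x0 \<noteq> 0" using vecs_nz[OF V0] by blast
    have pq: "ppt (v 1) = ppt (ev y :: nat \<Rightarrow> 'k)" by (rule atp_ppt[OF q])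
    consider "y = 1" | "y = n - 1" | "2 \<le> y \<and> y + 2 \<le> n" using yr n by arith
    thus ?thesis
    proof cases
      case 1
      have "\<forall>i. v 0 i \<noteq> 0 \<longrightarrow> i = 2" using p 1 vecs_supp[OF V0] by fastforce
      hence "atp (v 0) 2" using x0 by (rule atp_intro)
      hence "pt 2 v \<in> Cset (Km 2) (Lm 2)"
        using pq 1 by (intro in_Cset[of 1 0]) (auto simp: Km_def Lm_10 atp_ppt)
      thus ?thesis using z in_U2[of 2 n] n by simp
    next
      case 2
      have "\<forall>i. v 0 i \<noteq> 0 \<longrightarrow> i = n - 2" using p 2 vecs_supp[OF V0] n by fastforce
      hence "atp (v 0) (n-2)" using x0 by (rule atp_intro)
      moreover have "n - 2 + 1 = n - 1" using n by simp
      ultimately have "pt 2 v \<in> Cset (Km (n-2)) (Lm (n-2))"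
        using pq 2 by (intro in_Cset[of 0 1]) (auto simp: Km_def Lm_01 atp_ppt)
      moreover have "2 \<le> n - 2" "n - 2 + 2 \<le> n" using n by arith+
      ultimately show ?thesis using z in_U2[of "n-2" n] by simp
    next
      case 3
      have sup: "\<forall>k. v 0 k \<noteq> 0 \<longrightarrow> k = y - 1 \<or> k = y + 1" using p by force
      have "(v 0 (y-1), v 0 (y+1)) \<noteq> (0,0)"
      proof
        assume "(v 0 (y-1), v 0 (y+1)) = (0,0)"
        thus False using sup x0 by (metis prod.inject)
      qed
      moreover have "ppt (v 0) = Lm y (v 0 (y-1), v 0 (y+1))"
        using lv_eq[of y "v 0"] sup 3 by (simp add: Lm_def)
      ultimately have "pt 2 v \<in> Cset (Lm y) (Km y)"
        using pq by (intro in_Cset) (auto simp: Km_def)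
      thus ?thesis using z in_U1[of y n] 3 by simp
    qed
  next
    fix x assume p: "atp (v 0) x" and q: "\<forall>i. v 1 i \<noteq> 0 \<longrightarrow> i = x + 1 \<or> x = i + 1"
    have xr: "1 \<le> x" "x \<le> n - 1" using vecs_supp[OF V0, of x] p by (auto simp: atp_def)
    obtain y0 where y0: "v 1 y0 \<noteq> 0" using vecs_nz[OF V1] by blast
    have pp: "ppt (v 0) = ppt (ev x :: nat \<Rightarrow> 'k)" by (rule atp_ppt[OF p])
    consider "x = 1" | "x = n - 1" | "2 \<le> x \<and> x + 2 \<le> n" using xr n by arith
    thus ?thesis
    proof cases
      case 1
      have "\<forall>i. v 1 i \<noteq> 0 \<longrightarrow> i = 2" using q 1 vecs_supp[OF V1] by fastforce
      hence "atp (v 1) 2" using y0 by (rule atp_intro)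
      hence "pt 2 v \<in> Cset (Lm 2) (Km 2)"
        using pp 1 by (intro in_Cset[of 1 0]) (auto simp: Km_def Lm_10 atp_ppt)
      thus ?thesis using z in_U1[of 2 n] n by simp
    next
      case 2
      have "\<forall>i. v 1 i \<noteq> 0 \<longrightarrow> i = n - 2" using q 2 vecs_supp[OF V1] n by fastforce
      hence "atp (v 1) (n-2)" using y0 by (rule atp_intro)
      moreover have "n - 2 + 1 = n - 1" using n by simp
      ultimately have "pt 2 v \<in> Cset (Lm (n-2)) (Km (n-2))"
        using pp 2 by (intro in_Cset[of 0 1]) (auto simp: Km_def Lm_01 atp_ppt)
      moreover have "2 \<le> n - 2" "n - 2 + 2 \<le> n" using n by arith+
      ultimately show ?thesis using z in_U1[of "n-2" n] by simp
    next
      case 3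
      have sup: "\<forall>k. v 1 k \<noteq> 0 \<longrightarrow> k = x - 1 \<or> k = x + 1" using q by force
      have "(v 1 (x-1), v 1 (x+1)) \<noteq> (0,0)"
      proof
        assume "(v 1 (x-1), v 1 (x+1)) = (0,0)"
        thus False using sup y0 by (metis prod.inject)
      qed
      moreover have "ppt (v 1) = Lm x (v 1 (x-1), v 1 (x+1))"
        using lv_eq[of x "v 1"] sup 3 by (simp add: Lm_def)
      ultimately have "pt 2 v \<in> Cset (Km x) (Lm x)"
        using pp by (intro in_Cset) (auto simp: Km_def)
      thus ?thesis using z in_U2[of x n] 3 by simp
    qed
  qed
qed

definition W1 :: "nat \<Rightarrow> nat \<Rightarrow> (nat \<Rightarrow> 'k::field) set" where
  "W1 a = (\<lambda>j. if j = 0 then Lm a (1,1) else if j = 1 then Km a (1,1) else {})"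
definition W2 :: "nat \<Rightarrow> nat \<Rightarrow> (nat \<Rightarrow> 'k::field) set" where
  "W2 a = (\<lambda>j. if j = 0 then Km a (1,1) else if j = 1 then Lm a (1,1) else {})"

lemma W1_in: "W1 a \<in> Cset (Lm a) (Km a)"
  unfolding W1_def Cset_def by (rule CollectI, rule exI[of _ 1], rule exI[of _ 1]) simp
lemma W2_in: "W2 a \<in> Cset (Km a) (Lm a)"
  unfolding W2_def Cset_def by (rule CollectI, rule exI[of _ 1], rule exI[of _ 1]) simp

lemma K1: "(W1 a :: nat \<Rightarrow> (nat \<Rightarrow> 'k::field) set) \<in> Cset (Lm b) (Km b) \<Longrightarrow> a = b"
proof -
  assume "(W1 a :: nat \<Rightarrow> (nat \<Rightarrow> 'k) set) \<in> Cset (Lm b) (Km b)"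
  then obtain s t where "(W1 a :: nat \<Rightarrow> (nat \<Rightarrow> 'k) set) 1 = Km b (s,t)" by (rule Cset_elim)
  hence "ppt (ev a :: nat \<Rightarrow> 'k) = ppt (ev b)" by (simp add: W1_def Km_def)
  thus ?thesis by (rule ppt_ev_inj)
qed

lemma K2: "1 \<le> a \<Longrightarrow> (W1 a :: nat \<Rightarrow> (nat \<Rightarrow> 'k::field) set) \<notin> Cset (Km b) (Lm b)"
proof
  assume a: "1 \<le> a" and h: "(W1 a :: nat \<Rightarrow> (nat \<Rightarrow> 'k) set) \<in> Cset (Km b) (Lm b)"
  obtain s t where "(s,t) \<noteq> (0,0)" "(W1 a :: nat \<Rightarrow> (nat \<Rightarrow> 'k) set) 0 = Km b (s,t)" "(W1 a :: nat \<Rightarrow> (nat \<Rightarrow> 'k) set) 1 = Lm b (s,t)"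
    by (rule Cset_elim[OF h])
  hence "Lm a (1,1) = ppt (ev b :: nat \<Rightarrow> 'k)" by (simp add: W1_def Km_def)
  thus False using Lm_ne_ev[OF a] by blast
qed

lemma K3: "(W2 a :: nat \<Rightarrow> (nat \<Rightarrow> 'k::field) set) \<in> Cset (Km b) (Lm b) \<Longrightarrow> a = b"
proof -
  assume "(W2 a :: nat \<Rightarrow> (nat \<Rightarrow> 'k) set) \<in> Cset (Km b) (Lm b)"
  then obtain s t where "(W2 a :: nat \<Rightarrow> (nat \<Rightarrow> 'k) set) 0 = Km b (s,t)" by (rule Cset_elim)
  hence "ppt (ev a :: nat \<Rightarrow> 'k) = ppt (ev b)" by (simp add: W2_def Km_def)
  thus ?thesis by (rule ppt_ev_inj)
qed

lemma K4: "1 \<le> a \<Longrightarrow> (W2 a :: nat \<Rightarrow> (nat \<Rightarrow> 'k::field) set) \<notin> Cset (Lm b) (Km b)"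
proof
  assume a: "1 \<le> a" and h: "(W2 a :: nat \<Rightarrow> (nat \<Rightarrow> 'k) set) \<in> Cset (Lm b) (Km b)"
  obtain s t where "(s,t) \<noteq> (0,0)" "(W2 a :: nat \<Rightarrow> (nat \<Rightarrow> 'k) set) 0 = Lm b (s,t)" "(W2 a :: nat \<Rightarrow> (nat \<Rightarrow> 'k) set) 1 = Km b (s,t)"
    by (rule Cset_elim[OF h])
  hence "Lm a (1,1) = ppt (ev b :: nat \<Rightarrow> 'k)" by (simp add: W2_def Km_def)
  thus False using Lm_ne_ev[OF a] by blast
qed

lemma Cc_inj: "inj_on (Cc n :: nat \<Rightarrow> (nat \<Rightarrow> (nat \<Rightarrow> 'k::field) set) set) {..<2 * n - 6}"
proof (rule inj_onI)
  fix i j assume i: "i \<in> {..<2 * n - 6}" and j: "j \<in> {..<2 * n - 6}"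
    and e: "(Cc n i :: (nat \<Rightarrow> (nat \<Rightarrow> 'k) set) set) = Cc n j"
  show "i = j"
  proof (cases "i < n - 3")
    case True
    have "(W1 (i+2) :: nat \<Rightarrow> (nat \<Rightarrow> 'k) set) \<in> Cc n j" using e[symmetric] True W1_in by (simp add: Cc_def)
    thus ?thesis
    proof (cases "j < n - 3")
      case True
      assume "(W1 (i+2) :: nat \<Rightarrow> (nat \<Rightarrow> 'k) set) \<in> Cc n j"
      hence "(W1 (i+2) :: nat \<Rightarrow> (nat \<Rightarrow> 'k) set) \<in> Cset (Lm (j+2)) (Km (j+2))" using True by (simp add: Cc_def)
      hence "i + 2 = j + 2" by (rule K1)
      thus "i = j" by simp
    next
      case False
      assume "(W1 (i+2) :: nat \<Rightarrow> (nat \<Rightarrow> 'k) set) \<in> Cc n j"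
      hence "(W1 (i+2) :: nat \<Rightarrow> (nat \<Rightarrow> 'k) set) \<in> Cset (Km (j - (n-3) + 2)) (Lm (j - (n-3) + 2))" using False by (simp add: Cc_def)
      moreover have "(W1 (i+2) :: nat \<Rightarrow> (nat \<Rightarrow> 'k) set) \<notin> Cset (Km (j - (n-3) + 2)) (Lm (j - (n-3) + 2))"
        by (rule K2) simp
      ultimately show "i = j" by contradiction
    qed
  next
    case False
    have "(W2 (i - (n-3) + 2) :: nat \<Rightarrow> (nat \<Rightarrow> 'k) set) \<in> Cc n j" using e[symmetric] False W2_in by (simp add: Cc_def)
    thus ?thesis
    proof (cases "j < n - 3")
      case True
      assume "(W2 (i - (n-3) + 2) :: nat \<Rightarrow> (nat \<Rightarrow> 'k) set) \<in> Cc n j"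
      hence "(W2 (i - (n-3) + 2) :: nat \<Rightarrow> (nat \<Rightarrow> 'k) set) \<in> Cset (Lm (j+2)) (Km (j+2))" using True by (simp add: Cc_def)
      moreover have "(W2 (i - (n-3) + 2) :: nat \<Rightarrow> (nat \<Rightarrow> 'k) set) \<notin> Cset (Lm (j+2)) (Km (j+2))"
        by (rule K4) simp
      ultimately show "i = j" by contradiction
    next
      case F2: False
      assume "(W2 (i - (n-3) + 2) :: nat \<Rightarrow> (nat \<Rightarrow> 'k) set) \<in> Cc n j"
      hence "(W2 (i - (n-3) + 2) :: nat \<Rightarrow> (nat \<Rightarrow> 'k) set) \<in> Cset (Km (j - (n-3) + 2)) (Lm (j - (n-3) + 2))"
        using F2 by (simp add: Cc_def)
      hence "i - (n-3) + 2 = j - (n-3) + 2" by (rule K3)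
      thus "i = j" using False F2 by arith
    qed
  qed
qed

lemma pt2_atp:
  assumes "atp (v 0) x" "atp (v 1) y"
  shows "pt 2 v = (\<lambda>j. if j < 2 then ppt (ev (if j = 0 then x else y) :: nat \<Rightarrow> 'k::field) else {})"
proof
  fix j show "pt 2 v j = (if j < 2 then ppt (ev (if j = 0 then x else y) :: nat \<Rightarrow> 'k) else {})"
    using atp_ppt[OF assms(1)] atp_ppt[OF assms(2)] by (cases "j = 0"; cases "j = 1") (auto simp: pt_def numeral_2_eq_2)
qed

lemma pt2_inc: "pt 2 (\<lambda>j. ev (1+j)) = (\<lambda>j. if j < 2 then ppt (ev (if j = 0 then 1 else 2) :: nat \<Rightarrow> 'k::field) else {})"
proof
  fix j show "pt 2 (\<lambda>j. ev (1+j)) j = (if j < 2 then ppt (ev (if j = 0 then 1 else 2) :: nat \<Rightarrow> 'k) else {})"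
    by (cases "j = 0"; cases "j = 1") (auto simp: pt_def numeral_2_eq_2)
qed

lemma pt2_dec: "pt 2 (\<lambda>j. ev (2-j)) = (\<lambda>j. if j < 2 then ppt (ev (if j = 0 then 2 else 1) :: nat \<Rightarrow> 'k::field) else {})"
proof
  fix j show "pt 2 (\<lambda>j. ev (2-j)) j = (if j < 2 then ppt (ev (if j = 0 then 2 else 1) :: nat \<Rightarrow> 'k) else {})"
    by (cases "j = 0"; cases "j = 1") (auto simp: pt_def numeral_2_eq_2)
qed

lemma Pd3:
  "Pd_An TYPE('k::field) 3 2 = {pt 2 (\<lambda>j. ev (1+j)), pt 2 (\<lambda>j. ev (2-j))}"
proof
  show "{pt 2 (\<lambda>j. ev (1+j)), pt 2 (\<lambda>j. ev (2-j))} \<subseteq> Pd_An TYPE('k::field) 3 2"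
    using inc_in[of 1 2 3] dec_in[of 2 2 3] by auto
next
  show "Pd_An TYPE('k::field) 3 2 \<subseteq> {pt 2 (\<lambda>j. ev (1+j)), pt 2 (\<lambda>j. ev (2-j))}"
  proof
    fix z assume "z \<in> Pd_An TYPE('k::field) 3 2"
    then obtain v :: "nat \<Rightarrow> nat \<Rightarrow> 'k" where z: "z = pt 2 v" and V: "\<forall>j<2. v j \<in> vecs (3 - 1)" and P: "Pcond TYPE('k) 3 2 v"
      unfolding Pd_An_iff by blast
    have V0: "v 0 \<in> vecs 2" and V1: "v 1 \<in> vecs 2" using V by auto
    obtain x0 where x0: "v 0 x0 \<noteq> 0" using vecs_nz[OF V0] by blast
    obtain y0 where y0: "v 1 y0 \<noteq> 0" using vecs_nz[OF V1] by blast
    have r0: "i = 1 \<or> i = 2" if "v 0 i \<noteq> 0" for i using vecs_supp[OF V0 that] by auto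
    have r1: "i = 1 \<or> i = 2" if "v 1 i \<noteq> 0" for i using vecs_supp[OF V1 that] by auto
    have "(atp (v 0) 1 \<and> atp (v 1) 2) \<or> (atp (v 0) 2 \<and> atp (v 1) 1)"
      using pair_facts[OF P V]
    proof (elim disjE exE conjE)
      fix y assume q: "atp (v 1) y" and p: "\<forall>i. v 0 i \<noteq> 0 \<longrightarrow> i + 1 = y \<or> i = y + 1"
      have "y = 1 \<or> y = 2" using r1 q by (auto simp: atp_def)
      thus ?thesis
      proof
        assume y: "y = 1"
        have "\<forall>i. v 0 i \<noteq> 0 \<longrightarrow> i = 2" using p r0 y by force
        hence "atp (v 0) 2" using x0 by (rule atp_intro)
        thus ?thesis using q y by simp
      next
        assume y: "y = 2"
        have "\<forall>i. v 0 i \<noteq> 0 \<longrightarrow> i = 1" using p r0 y by force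
        hence "atp (v 0) 1" using x0 by (rule atp_intro)
        thus ?thesis using q y by simp
      qed
    next
      fix x assume p: "atp (v 0) x" and q: "\<forall>i. v 1 i \<noteq> 0 \<longrightarrow> i = x + 1 \<or> x = i + 1"
      have "x = 1 \<or> x = 2" using r0 p by (auto simp: atp_def)
      thus ?thesis
      proof
        assume x: "x = 1"
        have "\<forall>i. v 1 i \<noteq> 0 \<longrightarrow> i = 2" using q r1 x by force
        hence "atp (v 1) 2" using y0 by (rule atp_intro)
        thus ?thesis using p x by simp
      next
        assume x: "x = 2"
        have "\<forall>i. v 1 i \<noteq> 0 \<longrightarrow> i = 1" using q r1 x by force
        hence "atp (v 1) 1" using y0 by (rule atp_intro)
        thus ?thesis using p x by simp
      qed
    qed
    thus "z \<in> {pt 2 (\<lambda>j. ev (1+j)), pt 2 (\<lambda>j. ev (2-j))}"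
    proof (elim disjE conjE)
      assume h: "atp (v 0) 1" "atp (v 1) 2"
      have "z = pt 2 (\<lambda>j. ev (1+j))" unfolding z pt2_inc by (rule pt2_atp[OF h])
      thus ?thesis by simp
    next
      assume h: "atp (v 0) 2" "atp (v 1) 1"
      have "z = pt 2 (\<lambda>j. ev (2-j))" unfolding z pt2_dec by (rule pt2_atp[OF h])
      thus ?thesis by simp
    qed
  qed
qed

lemma card_Pd3: "card (Pd_An TYPE('k::field) 3 2) = 2"
proof -
  have "pt 2 (\<lambda>j. ev (1+j)) \<noteq> (pt 2 (\<lambda>j. ev (2-j)) :: nat \<Rightarrow> (nat \<Rightarrow> 'k) set)"
  proof
    assume "pt 2 (\<lambda>j. ev (1+j)) = (pt 2 (\<lambda>j. ev (2-j)) :: nat \<Rightarrow> (nat \<Rightarrow> 'k) set)"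
    hence "(\<lambda>j::nat. if j < 2 then ppt (ev (if j = 0 then 1 else 2) :: nat \<Rightarrow> 'k) else {}) = (\<lambda>j::nat. if j < 2 then ppt (ev (if j = 0 then 2 else 1)) else {})"
      unfolding pt2_inc pt2_dec .
    from fun_cong[OF this, of 0] have "ppt (ev 1 :: nat \<Rightarrow> 'k) = ppt (ev 2)" by simp
    thus False using ppt_ev_inj[where 'k='k, of 1 2] by simp
  qed
  thus ?thesis unfolding Pd3 by simp
qed

theorem proposition3p2:
  fixes n :: nat
  assumes "n \<ge> 3"
  shows "(\<forall>d. 3 \<le> d \<and> d \<le> n - 1 \<longrightarrow> card (Pd_An TYPE('k::alg_closed_field) n d) = 2 * n - 2 * d)
       \<and> (\<forall>d. d \<ge> n \<longrightarrow> Pd_An TYPE('k) n d = {})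
       \<and> (n > 3 \<longrightarrow> (\<exists>C :: nat \<Rightarrow> (nat \<Rightarrow> (nat \<Rightarrow> 'k) set) set.
              (\<forall>i < 2 * n - 6. is_P1_copy (n - 1) (C i)) \<and> inj_on C {..< 2 * n - 6} \<and>
              (\<Union>i < 2 * n - 6. C i) = Pd_An TYPE('k) n 2))
       \<and> (n = 3 \<longrightarrow> card (Pd_An TYPE('k) n 2) = 2)"
proof (intro conjI allI impI)
  fix d assume d: "3 \<le> d \<and> d \<le> n - 1"
  have eq: "Pd_An TYPE('k) n d = (\<lambda>a. pt d (\<lambda>j. ev (a+j))) ` {1..n-d} \<union> (\<lambda>b. pt d (\<lambda>j. ev (b-j))) ` {d..n-1}"
    by (rule Pd_ge3) (use d assms in auto)
  have "card (Pd_An TYPE('k) n d) = (n - d) + (n - d)"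
    unfolding eq by (rule card_chains) (use d assms in auto)
  thus "card (Pd_An TYPE('k) n d) = 2 * n - 2 * d" using d by simp
next
  fix d assume d: "n \<le> d"
  have "{1..n-d} = {}" "{d..n-1} = {}" using d assms by auto
  moreover have "Pd_An TYPE('k) n d = (\<lambda>a. pt d (\<lambda>j. ev (a+j))) ` {1..n-d} \<union> (\<lambda>b. pt d (\<lambda>j. ev (b-j))) ` {d..n-1}"
    by (rule Pd_ge3) (use d assms in auto)
  ultimately show "Pd_An TYPE('k) n d = {}" by simp
next
  assume n: "3 < n"
  show "\<exists>C :: nat \<Rightarrow> (nat \<Rightarrow> (nat \<Rightarrow> 'k) set) set.
              (\<forall>i < 2 * n - 6. is_P1_copy (n - 1) (C i)) \<and> inj_on C {..< 2 * n - 6} \<and>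
              (\<Union>i < 2 * n - 6. C i) = Pd_An TYPE('k) n 2"
  proof (intro exI[of _ "Cc n"] conjI allI impI)
    fix i assume i: "i < 2 * n - 6"
    show "is_P1_copy (n - 1) (Cc n i :: (nat \<Rightarrow> (nat \<Rightarrow> 'k) set) set)"
    proof (cases "i < n - 3")
      case True
      have h: "2 \<le> i + 2" "i + 2 + 2 \<le> n" using True by auto
      show ?thesis using P1_1[where 'k='k, OF h] True by (simp add: Cc_def)
    next
      case False
      have h: "2 \<le> i - (n-3) + 2" "i - (n-3) + 2 + 2 \<le> n" using False i n by auto
      show ?thesis using P1_2[where 'k='k, OF h] False by (simp add: Cc_def)
    qed
  next
    show "inj_on (Cc n :: nat \<Rightarrow> (nat \<Rightarrow> (nat \<Rightarrow> 'k) set) set) {..<2 * n - 6}" by (rule Cc_inj)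
  next
    show "(\<Union>i<2 * n - 6. Cc n i) = Pd_An TYPE('k) n 2"
    proof
      show "(\<Union>i<2 * n - 6. Cc n i) \<subseteq> Pd_An TYPE('k) n 2" using Cc_sub[where 'k='k, OF n] by blast
      show "Pd_An TYPE('k) n 2 \<subseteq> (\<Union>i<2 * n - 6. Cc n i)" by (rule Pd2_sub[OF n])
    qed
  qed
next
  assume "n = 3"
  thus "card (Pd_An TYPE('k) n 2) = 2" using card_Pd3 by simp
qed

end
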